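(* Let $H_0,H_1$ be complex Hilbert spaces, $G$ a densely defined closed operator from $H_0$ into $H_1$ and $D$ a densely defined closed operator from $H_1$ into $H_0$ with $-G^*\subset D$. Let $H$ be a Hilbert space and $\kappa\in\mathcal L(\mathrm{BD}(G),H)$ injective with dense range. Let $a\in\mathcal L(H_1)$ and $m\in\mathcal L(H_0)$ be coercive. Define $\mathfrak b\colon\mathrm{dom}(G)\times\mathrm{dom}(G)\to\mathbb C$ by $\mathfrak b(u,v)=(aGu,Gv)_{H_1}+(mu,v)_{H_0}$ and $j\colon\mathrm{dom}(G)\to H$ by $j=\kappa\circ\pi_{\mathrm{BD}(G)}$. Then $\mathfrak b$ is coercive and continuous on $\mathrm{dom}(G)$, and the Dirichlet-to-Neumann operator $\Lambda_H$ in $H$ associated with $-DaG+m$ equals the operator associated with $(\mathfrak b,j)$.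
   Context: $\mathring D=-G^*$, $\mathring G=-D^*$. Domains carry graph inner products. $\mathrm{BD}(G)$ (resp. $\mathrm{BD}(D)$) is the orthogonal complement of $\mathrm{dom}(\mathring G)$ in $\mathrm{dom}(G)$ (resp. of $\mathrm{dom}(\mathring D)$ in $\mathrm{dom}(D)$) with induced inner products; $\pi_{\mathrm{BD}(G)},\pi_{\mathrm{BD}(D)}$ are the orthogonal projections. $G$ maps $\mathrm{BD}(G)$ into $\mathrm{BD}(D)$. Coercive operator: $\mathrm{Re}(Mx,x)\ge\mu\|x\|^2$ for some $\mu>0$; a form $\mathfrak b$ on a Hilbert space $V$ is coercive if $\mathrm{Re}\,\mathfrak b(v,v)\ge\mu\|v\|_V^2$ for some $\mu>0$. For coercive $a,m$ and $u_0\in\mathrm{BD}(G)$ there is a unique $u\in\mathrm{dom}(G)$ with $aGu\in\mathrm{dom}(D)$, $mu-DaGu=0$, $u-u_0\in\mathrm{dom}(\mathring G)$; set $\Lambda u_0=\pi_{\mathrm{BD}(D)}(aGu)$. $\Lambda_H$: $\varphi\in\mathrm{dom}(\Lambda_H)$, $\Lambda_H\varphi=\psi$ iff there exists $u_0\in\mathrm{BD}(G)$ with $\kappa(u_0)=\varphi$ and $\Lambda u_0=G\kappa^*\psi$ ($\kappa^*\colon H\to\mathrm{BD}(G)$ the adjoint). The operator $A$ associated with $(\mathfrak b,j)$: for $x,f\in H$, $x\in\mathrm{dom}(A)$ and $Ax=f$ iff there exists $u\in\mathrm{dom}(G)$ with $j(u)=x$ and $\mathfrak b(u,v)=(f,j(v))_H$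 for all $v\in\mathrm{dom}(G)$. *)

theory Defs
  imports "HOL-Analysis.Analysis"
begin

text \<open>The library has no complex vector spaces; we introduce them as a type class.
  The inner product is linear in the first and conjugate linear in the second argument.\<close>

class complex_inner = real_normed_vector +
  fixes scaleC :: "complex \<Rightarrow> 'a \<Rightarrow> 'a" (infixr "*\<^sub>C" 75)
  fixes cinner :: "'a \<Rightarrow> 'a \<Rightarrow> complex"
  assumes scaleC_add_right: "c *\<^sub>C (x + y) = c *\<^sub>C x + c *\<^sub>C y"
    and scaleC_add_left: "(b + c) *\<^sub>C x = b *\<^sub>C x + c *\<^sub>C x"
    and scaleC_scaleC: "b *\<^sub>C (c *\<^sub>C x) = (b * c) *\<^sub>C x"
    and scaleC_one: "1 *\<^sub>C x = x"
    and scaleR_scaleC: "scaleR r x = complex_of_real r *\<^sub>C x"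
    and cinner_commute: "cinner x y = cnj (cinner y x)"
    and cinner_add_left: "cinner (x + y) z = cinner x z + cinner y z"
    and cinner_scaleC_left: "cinner (c *\<^sub>C x) y = c * cinner x y"
    and cinner_self_real: "Im (cinner x x) = 0"
    and cinner_self_nonneg: "0 \<le> Re (cinner x x)"
    and cinner_self_eq_zero: "cinner x x = 0 \<longleftrightarrow> x = 0"
    and norm_eq_sqrt_cinner: "norm x = sqrt (Re (cinner x x))"

class chilbert = complex_inner + complete_space

definition csubspace :: "'a::complex_inner set \<Rightarrow> bool" where
  "csubspace S \<longleftrightarrow> 0 \<in> S \<and> (\<forall>x\<in>S. \<forall>y\<in>S. x + y \<in> S) \<and> (\<forall>c. \<forall>x\<in>S. c *\<^sub>C x \<in> S)"

definition clinear_on :: "'a::complex_inner set \<Rightarrow> ('a \<Rightarrow> 'b::complex_inner) \<Rightarrow> bool" where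
  "clinear_on S f \<longleftrightarrow> (\<forall>x\<in>S. \<forall>y\<in>S. f (x + y) = f x + f y) \<and> (\<forall>c. \<forall>x\<in>S. f (c *\<^sub>C x) = c *\<^sub>C f x)"

text \<open>A (possibly unbounded) linear operator is given by a domain and a function;
  values outside the domain are irrelevant.\<close>

definition lin_op :: "'a::complex_inner set \<Rightarrow> ('a \<Rightarrow> 'b::complex_inner) \<Rightarrow> bool" where
  "lin_op S T \<longleftrightarrow> csubspace S \<and> clinear_on S T"

definition densely_defined :: "'a::complex_inner set \<Rightarrow> ('a \<Rightarrow> 'b::complex_inner) \<Rightarrow> bool" where
  "densely_defined S T \<longleftrightarrow> lin_op S T \<and> closure S = UNIV"

definition closed_op :: "'a::complex_inner set \<Rightarrow> ('a \<Rightarrow> 'b::complex_inner) \<Rightarrow> bool" where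
  "closed_op S T \<longleftrightarrow> closed {(x, T x) | x. x \<in> S}"

definition adj_dom :: "'a::complex_inner set \<Rightarrow> ('a \<Rightarrow> 'b::complex_inner) \<Rightarrow> 'b set" where
  "adj_dom S T = {y. \<exists>z. \<forall>x\<in>S. cinner (T x) y = cinner x z}"

definition adj :: "'a::complex_inner set \<Rightarrow> ('a \<Rightarrow> 'b::complex_inner) \<Rightarrow> 'b \<Rightarrow> 'a" where
  "adj S T y = (THE z. \<forall>x\<in>S. cinner (T x) y = cinner x z)"

definition graph_inner :: "('a::complex_inner \<Rightarrow> 'b::complex_inner) \<Rightarrow> 'a \<Rightarrow> 'a \<Rightarrow> complex" where
  "graph_inner T x y = cinner x y + cinner (T x) (T y)"

definition graph_norm :: "('a::complex_inner \<Rightarrow> 'b::complex_inner) \<Rightarrow> 'a \<Rightarrow> real" where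
  "graph_norm T x = sqrt (Re (graph_inner T x x))"

definition orth_proj :: "('a::complex_inner \<Rightarrow> 'b::complex_inner) \<Rightarrow> 'a set \<Rightarrow> 'a \<Rightarrow> 'a" where
  "orth_proj T V u = (THE p. p \<in> V \<and> (\<forall>w\<in>V. graph_inner T (u - p) w = 0))"

text \<open>Given G and D with -G^* \<subseteq> D: the ring operators are
  D0 = -G^* with domain dom(G^*) and G0 = -D^* with domain dom(D^*).\<close>

definition BD_G :: "'h0::complex_inner set \<Rightarrow> ('h0 \<Rightarrow> 'h1::complex_inner) \<Rightarrow> 'h1 set \<Rightarrow> ('h1 \<Rightarrow> 'h0) \<Rightarrow> 'h0 set" where
  "BD_G domG G domD D = {u \<in> domG. \<forall>v \<in> adj_dom domD D. graph_inner G u v = 0}"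

definition BD_D :: "'h0::complex_inner set \<Rightarrow> ('h0 \<Rightarrow> 'h1::complex_inner) \<Rightarrow> 'h1 set \<Rightarrow> ('h1 \<Rightarrow> 'h0) \<Rightarrow> 'h1 set" where
  "BD_D domG G domD D = {w \<in> domD. \<forall>v \<in> adj_dom domG G. graph_inner D w v = 0}"

definition cbounded_linear :: "('a::complex_inner \<Rightarrow> 'b::complex_inner) \<Rightarrow> bool" where
  "cbounded_linear f \<longleftrightarrow> clinear_on UNIV f \<and> (\<exists>K. \<forall>x. norm (f x) \<le> K * norm x)"

definition coercive_op :: "('a::complex_inner \<Rightarrow> 'a) \<Rightarrow> bool" where
  "coercive_op M \<longleftrightarrow> (\<exists>\<mu>>0. \<forall>x. Re (cinner (M x) x) \<ge> \<mu> * (norm x)\<^sup>2)"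

definition coercive_form :: "'a set \<Rightarrow> ('a::complex_inner \<Rightarrow> 'b::complex_inner) \<Rightarrow> ('a \<Rightarrow> 'a \<Rightarrow> complex) \<Rightarrow> bool" where
  "coercive_form V T b \<longleftrightarrow> (\<exists>\<mu>>0. \<forall>v\<in>V. Re (b v v) \<ge> \<mu> * (graph_norm T v)\<^sup>2)"

definition continuous_form :: "'a set \<Rightarrow> ('a::complex_inner \<Rightarrow> 'b::complex_inner) \<Rightarrow> ('a \<Rightarrow> 'a \<Rightarrow> complex) \<Rightarrow> bool" where
  "continuous_form V T b \<longleftrightarrow> (\<exists>C. \<forall>u\<in>V. \<forall>v\<in>V. norm (b u v) \<le> C * graph_norm T u * graph_norm T v)"

definition dtn_sol where
  "dtn_sol domG G domD D a m u0 =
     (THE u. u \<in> domG \<and> a (G u) \<in> domD \<and> m u - D (a (G u)) = 0 \<and> u - u0 \<in> adj_dom domD D)"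

definition dtn_Lambda where
  "dtn_Lambda domG G domD D a m u0 =
     orth_proj D (BD_D domG G domD D) (a (G (dtn_sol domG G domD D a m u0)))"

definition kappa_adj where
  "kappa_adj domG G domD D \<kappa> \<psi> =
     (THE w. w \<in> BD_G domG G domD D \<and> (\<forall>u \<in> BD_G domG G domD D. cinner (\<kappa> u) \<psi> = graph_inner G u w))"

definition dtn_H :: "'h0::complex_inner set \<Rightarrow> ('h0 \<Rightarrow> 'h1::complex_inner) \<Rightarrow> 'h1 set \<Rightarrow> ('h1 \<Rightarrow> 'h0)
    \<Rightarrow> ('h1 \<Rightarrow> 'h1) \<Rightarrow> ('h0 \<Rightarrow> 'h0) \<Rightarrow> ('h0 \<Rightarrow> 'h::complex_inner) \<Rightarrow> 'h \<Rightarrow> 'h \<Rightarrow> bool" where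
  "dtn_H domG G domD D a m \<kappa> \<phi> \<psi> \<longleftrightarrow>
     (\<exists>u0 \<in> BD_G domG G domD D. \<kappa> u0 = \<phi> \<and>
        dtn_Lambda domG G domD D a m u0 = G (kappa_adj domG G domD D \<kappa> \<psi>))"

definition form_op :: "'v set \<Rightarrow> ('v \<Rightarrow> 'v \<Rightarrow> complex) \<Rightarrow> ('v \<Rightarrow> 'h::complex_inner) \<Rightarrow> 'h \<Rightarrow> 'h \<Rightarrow> bool" where
  "form_op V b j x f \<longleftrightarrow> (\<exists>u\<in>V. j u = x \<and> (\<forall>v\<in>V. b u v = cinner f (j v)))"

end

theory Submission
  imports Defs
begin



lemma scaleC_zero_left [simp]: "0 *\<^sub>C (x::'a::complex_inner) = 0"
proof -
  have "scaleR 0 x = complex_of_real 0 *\<^sub>C x" by (rule scaleR_scaleC)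
  then show ?thesis by simp
qed

lemma scaleC_minus1: "(-1) *\<^sub>C x = - x"
  by (metis scaleR_scaleC scaleR_minus1_left of_real_minus of_real_1)

lemma scaleC_zero_right [simp]: "c *\<^sub>C 0 = 0"
  by (metis scaleC_zero_left scaleC_scaleC mult_zero_right)

lemma scaleC_minus_right: "c *\<^sub>C (- x) = - (c *\<^sub>C x)"
  by (metis scaleC_minus1 scaleC_scaleC mult.commute)

lemma scaleC_diff_right: "c *\<^sub>C (x - y) = c *\<^sub>C x - c *\<^sub>C y"
proof -
  have "c *\<^sub>C (x - y) = c *\<^sub>C (x + - y)" by simp
  also have "\<dots> = c *\<^sub>C x - c *\<^sub>C y" unfolding scaleC_add_right scaleC_minus_right by simp
  finally show ?thesis .
qed

lemma scaleC_minus_left: "(- c) *\<^sub>C x = - (c *\<^sub>C x)"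
  by (metis scaleC_minus1 scaleC_scaleC mult_minus1)

lemma scaleC_diff_left: "(b - c) *\<^sub>C x = b *\<^sub>C x - c *\<^sub>C x"
proof -
  have "(b - c) *\<^sub>C x = (b + - c) *\<^sub>C x" by simp
  also have "\<dots> = b *\<^sub>C x - c *\<^sub>C x" unfolding scaleC_add_left scaleC_minus_left by simp
  finally show ?thesis .
qed

lemma cinner_add_right: "cinner x (y + z) = cinner x y + cinner x z"
  by (metis cinner_commute cinner_add_left complex_cnj_add)

lemma cinner_scaleC_right: "cinner x (c *\<^sub>C y) = cnj c * cinner x y"
  by (metis cinner_commute cinner_scaleC_left complex_cnj_mult)

lemma cinner_zero_left [simp]: "cinner 0 y = 0"
  by (metis scaleC_zero_left cinner_scaleC_left mult_zero_left)

lemma cinner_zero_right [simp]: "cinner x 0 = 0"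
  by (metis cinner_commute cinner_zero_left complex_cnj_zero)

lemma cinner_minus_left: "cinner (- x) y = - cinner x y"
  by (metis scaleC_minus1 cinner_scaleC_left mult_minus1)

lemma cinner_minus_right: "cinner x (- y) = - cinner x y"
  by (metis cinner_commute cinner_minus_left complex_cnj_minus)

lemma cinner_diff_left: "cinner (x - y) z = cinner x z - cinner y z"
proof -
  have "cinner (x - y) z = cinner (x + - y) z" by simp
  also have "\<dots> = cinner x z - cinner y z" unfolding cinner_add_left cinner_minus_left by simp
  finally show ?thesis .
qed

lemma cinner_diff_right: "cinner x (y - z) = cinner x y - cinner x z"
proof -
  have "cinner x (y - z) = cinner x (y + - z)" by simp
  also have "\<dots> = cinner x y - cinner x z" unfolding cinner_add_right cinner_minus_right by simp
  finally show ?thesis .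
qed

lemma cinner_scaleR_left: "cinner (scaleR r x) y = of_real r * cinner x y"
  by (simp add: scaleR_scaleC cinner_scaleC_left)

lemma cinner_scaleR_right: "cinner x (scaleR r y) = of_real r * cinner x y"
  by (simp add: scaleR_scaleC cinner_scaleC_right)

lemma cinner_self_of_real: "cinner x x = of_real (Re (cinner x x))"
  by (simp add: complex_eq_iff cinner_self_real)

lemma norm_sq_cinner: "(norm x)^2 = Re (cinner x x)"
  by (simp add: norm_eq_sqrt_cinner cinner_self_nonneg)

lemma cinner_self_norm: "cinner x x = of_real ((norm x)^2)"
  by (metis cinner_self_of_real norm_sq_cinner)

lemma Re_cinner_self_ge: "0 \<le> Re (cinner x x)" by (rule cinner_self_nonneg)

lemma cinner_sum_self_eq_zero:
  assumes "Re (cinner x x) + Re (cinner y y) = 0" shows "x = 0" "y = 0"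
proof -
  have "Re (cinner x x) = 0" "Re (cinner y y) = 0" using assms cinner_self_nonneg[of x] cinner_self_nonneg[of y] by linarith+
  then show "x = 0" "y = 0" by (metis cinner_self_of_real cinner_self_eq_zero of_real_0)+
qed

lemma norm_diff_sq: "(norm (x - y))^2 = (norm x)^2 + (norm y)^2 - 2 * Re (cinner x y)"
proof -
  have "cinner (x - y) (x - y) = cinner x x + cinner y y - (cinner x y + cinner y x)"
    by (simp add: cinner_diff_left cinner_diff_right algebra_simps)
  moreover have "Re (cinner y x) = Re (cinner x y)" by (subst cinner_commute) simp
  ultimately show ?thesis by (simp add: norm_sq_cinner)
qed

lemma norm_scaleC: "norm (c *\<^sub>C (x::'a::complex_inner)) = cmod c * norm x"
proof -
  have "cinner (c *\<^sub>C x) (c *\<^sub>C x) = (c * cnj c) * cinner x x"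
    by (simp add: cinner_scaleC_left cinner_scaleC_right mult.assoc)
  also have "\<dots> = of_real ((cmod c)^2 * (norm x)^2)"
    by (simp add: complex_norm_square[symmetric] cinner_self_norm)
  finally show ?thesis
    by (simp add: norm_eq_sqrt_cinner[of "c *\<^sub>C x"] real_sqrt_mult norm_sq_cinner[symmetric])
qed

lemma cauchy_schwarz: "norm (cinner x y) \<le> norm x * norm y"
proof (cases "y = 0")
  case True then show ?thesis by simp
next
  case False
  define c where "c = cinner x y"
  define r where "r = (norm y)^2"
  have r0: "r > 0" using False by (simp add: r_def)
  define t where "t = c / of_real r"
  have nt: "cmod t = cmod c / r" using r0 by (simp add: t_def norm_divide)
  have "0 \<le> (norm (x - t *\<^sub>C y))^2" by simp
  also have "\<dots> = (norm x)^2 + (norm (t *\<^sub>C y))^2 - 2 * Re (cinner x (t *\<^sub>C y))"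
    by (rule norm_diff_sq)
  also have "(norm (t *\<^sub>C y))^2 = (cmod c)^2 / r"
  proof -
    have "(norm (t *\<^sub>C y))^2 = (cmod c / r)^2 * r" by (simp only: norm_scaleC nt power_mult_distrib r_def)
    also have "\<dots> = (cmod c)^2 / r" using r0 by (simp add: power2_eq_square)
    finally show ?thesis .
  qed
  also have "cinner x (t *\<^sub>C y) = of_real ((cmod c)^2 / r)"
  proof -
    have "cinner x (t *\<^sub>C y) = cnj t * c" by (simp add: cinner_scaleC_right c_def)
    also have "\<dots> = (c * cnj c) / of_real r" by (simp add: t_def)
    also have "\<dots> = of_real ((cmod c)^2 / r)" by (simp add: complex_norm_square[symmetric])
    finally show ?thesis .
  qed
  finally have "0 \<le> (norm x)^2 - (cmod c)^2 / r" by simp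
  then have "(cmod c)^2 \<le> (norm x)^2 * r" using r0 by (simp add: field_simps)
  then have "(cmod c)^2 \<le> (norm x * norm y)^2" by (simp add: r_def power_mult_distrib)
  then show ?thesis unfolding c_def by (meson norm_ge_zero power2_le_imp_le zero_le_mult_iff)
qed



lemma bounded_bilinear_cinner: "bounded_bilinear (cinner :: 'a::complex_inner \<Rightarrow> 'a \<Rightarrow> complex)"
proof
  fix a a' b b' :: 'a and r :: real
  show "cinner (a + a') b = cinner a b + cinner a' b" by (rule cinner_add_left)
  show "cinner a (b + b') = cinner a b + cinner a b'" by (rule cinner_add_right)
  show "cinner (r *\<^sub>R a) b = r *\<^sub>R cinner a b" by (simp add: cinner_scaleR_left scaleR_conv_of_real)
  show "cinner a (r *\<^sub>R b) = r *\<^sub>R cinner a b" by (simp add: cinner_scaleR_right scaleR_conv_of_real)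
  show "\<exists>K. \<forall>a b::'a. norm (cinner a b) \<le> norm a * norm b * K"
  proof (intro exI allI)
    fix a b :: 'a show "norm (cinner a b) \<le> norm a * norm b * 1" using cauchy_schwarz[of a b] by simp
  qed
qed

lemmas tendsto_cinner = bounded_bilinear.tendsto[OF bounded_bilinear_cinner]
lemmas continuous_on_cinner = bounded_bilinear.continuous_on[OF bounded_bilinear_cinner]

lemma continuous_on_cinner_left: "continuous_on UNIV (\<lambda>x::'a::complex_inner. cinner x y)"
  by (intro continuous_on_cinner continuous_on_id continuous_on_const)

lemma continuous_on_cinner_right: "continuous_on UNIV (\<lambda>y::'a::complex_inner. cinner x y)"
  by (intro continuous_on_cinner continuous_on_id continuous_on_const)

lemma closed_cinner_eq: "closed {x::'a::complex_inner. cinner x y = c}"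
  using closed_Collect_eq[OF continuous_on_cinner_left continuous_on_const] .

instantiation prod :: (complex_inner, complex_inner) complex_inner
begin
definition scaleC_prod_def: "c *\<^sub>C x = (c *\<^sub>C fst x, c *\<^sub>C snd x)"
definition cinner_prod_def: "cinner x y = cinner (fst x) (fst y) + cinner (snd x) (snd y)"
instance proof
  fix x y z :: "'a \<times> 'b" and b c :: complex and r :: real
  show "c *\<^sub>C (x + y) = c *\<^sub>C x + c *\<^sub>C y" by (simp add: scaleC_prod_def scaleC_add_right)
  show "(b + c) *\<^sub>C x = b *\<^sub>C x + c *\<^sub>C x" by (simp add: scaleC_prod_def scaleC_add_left)
  show "b *\<^sub>C (c *\<^sub>C x) = (b * c) *\<^sub>C x" by (simp add: scaleC_prod_def scaleC_scaleC)
  show "1 *\<^sub>C x = x" by (simp add: scaleC_prod_def scaleC_one)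
  show "r *\<^sub>R x = complex_of_real r *\<^sub>C x" by (simp add: scaleC_prod_def scaleR_scaleC prod_eq_iff)
  show "cinner x y = cnj (cinner y x)" by (simp add: cinner_prod_def) (metis cinner_commute)
  show "cinner (x + y) z = cinner x z + cinner y z" by (simp add: cinner_prod_def cinner_add_left)
  show "cinner (c *\<^sub>C x) y = c * cinner x y" by (simp add: cinner_prod_def scaleC_prod_def cinner_scaleC_left distrib_left)
  show "Im (cinner x x) = 0" by (simp add: cinner_prod_def cinner_self_real)
  show "0 \<le> Re (cinner x x)" by (simp add: cinner_prod_def cinner_self_nonneg add_nonneg_nonneg)
  show "(cinner x x = 0) = (x = 0)"
  proof
    assume "cinner x x = 0"
    then have "Re (cinner (fst x) (fst x) + cinner (snd x) (snd x)) = 0" by (simp add: cinner_prod_def)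
    then have "Re (cinner (fst x) (fst x)) + Re (cinner (snd x) (snd x)) = 0" by simp
    then show "x = 0" using cinner_sum_self_eq_zero by (metis prod.collapse zero_prod_def)
  qed (simp add: cinner_prod_def)
  show "norm x = sqrt (Re (cinner x x))" by (simp add: norm_prod_def cinner_prod_def norm_sq_cinner)
qed
end

instance prod :: (chilbert, chilbert) chilbert ..

lemma cinner_Pair: "cinner (a, b) (c, d) = cinner a c + cinner b d" by (simp add: cinner_prod_def)
lemma scaleC_Pair: "c *\<^sub>C (a, b) = (c *\<^sub>C a, c *\<^sub>C b)" by (simp add: scaleC_prod_def)



lemma norm_add_sq: "(norm (x + y))^2 = (norm x)^2 + (norm y)^2 + 2 * Re (cinner x y)"
  for x y :: "'a::complex_inner"
  using norm_diff_sq[of x "-y"] by (simp add: cinner_minus_right)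

lemma parallelogram: "(norm (x + y))^2 + (norm (x - y))^2 = 2 * (norm x)^2 + 2 * (norm y)^2"
  for x y :: "'a::complex_inner"
  using norm_add_sq[of x y] norm_diff_sq[of x y] by simp

lemma csubspace_0: "csubspace M \<Longrightarrow> 0 \<in> M" by (simp add: csubspace_def)
lemma csubspace_add: "csubspace M \<Longrightarrow> x \<in> M \<Longrightarrow> y \<in> M \<Longrightarrow> x + y \<in> M" by (simp add: csubspace_def)
lemma csubspace_scaleC: "csubspace M \<Longrightarrow> x \<in> M \<Longrightarrow> c *\<^sub>C x \<in> M" by (simp add: csubspace_def)
lemma csubspace_minus: "csubspace M \<Longrightarrow> x \<in> M \<Longrightarrow> - x \<in> M"
  by (metis csubspace_scaleC scaleC_minus1)
lemma csubspace_diff: "csubspace M \<Longrightarrow> x \<in> M \<Longrightarrow> y \<in> M \<Longrightarrow> x - y \<in> M"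
  by (metis csubspace_add csubspace_minus diff_conv_add_uminus)
lemma csubspace_scaleR: "csubspace M \<Longrightarrow> x \<in> M \<Longrightarrow> r *\<^sub>R x \<in> M"
  by (metis csubspace_scaleC scaleR_scaleC)

lemma projection_exists:
  fixes M :: "'a::chilbert set"
  assumes sub: "csubspace M" and cl: "closed M"
  shows "\<exists>p\<in>M. \<forall>y\<in>M. cinner (x - p) y = 0"
proof -
  define d where "d = Inf ((\<lambda>y. norm (x - y)) ` M)"
  have ne: "(\<lambda>y. norm (x - y)) ` M \<noteq> {}" using csubspace_0[OF sub] by blast
  have bdd: "bdd_below ((\<lambda>y. norm (x - y)) ` M)" by (rule bdd_belowI[of _ 0]) auto
  have dle: "d \<le> norm (x - y)" if "y \<in> M" for y
    unfolding d_def using bdd that by (simp add: cInf_lower)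
  have d0: "0 \<le> d" unfolding d_def by (rule cInf_greatest[OF ne]) auto
  have "\<exists>y\<in>M. (norm (x - y))^2 < d^2 + 1 / real (Suc n)" for n
  proof -
    have "d < sqrt (d^2 + 1 / real (Suc n))"
      using d0 by (metis add_strict_left_mono add_0_right of_nat_0_less_iff real_sqrt_abs
          real_sqrt_less_mono zero_less_Suc zero_less_divide_1_iff abs_of_nonneg)
    then obtain y where "y \<in> M" "norm (x - y) < sqrt (d^2 + 1 / real (Suc n))"
      using cInf_lessD[OF ne] unfolding d_def by auto
    moreover have B0: "0 \<le> d^2 + 1 / real (Suc n)" by simp
    ultimately have "(norm (x - y))^2 < (sqrt (d^2 + 1 / real (Suc n)))^2"
      by (intro power_strict_mono) auto
    then show ?thesis using B0 \<open>y \<in> M\<close> by (metis real_sqrt_pow2)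
  qed
  then obtain Y where Y: "\<And>n. Y n \<in> M" "\<And>n. (norm (x - Y n))^2 < d^2 + 1 / real (Suc n)"
    by metis
  have bound: "(norm (Y n - Y k))^2 \<le> 2 / real (Suc n) + 2 / real (Suc k)" for n k
  proof -
    have "(1/2) *\<^sub>R (Y n + Y k) \<in> M" using Y(1) sub by (simp add: csubspace_add csubspace_scaleR)
    then have "d \<le> norm (x - (1/2) *\<^sub>R (Y n + Y k))" by (rule dle)
    then have "d^2 \<le> (norm (x - (1/2) *\<^sub>R (Y n + Y k)))^2" using d0 by (simp add: power_mono)
    also have "(norm (x - (1/2) *\<^sub>R (Y n + Y k)))^2 = (norm ((x - Y n) + (x - Y k)))^2 / 4"
    proof -
      have "(x - Y n) + (x - Y k) = 2 *\<^sub>R (x - (1/2) *\<^sub>R (Y n + Y k))"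
        by (simp add: algebra_simps scaleR_2)
      then show ?thesis by (simp add: power_mult_distrib)
    qed
    finally have "4 * d^2 \<le> (norm ((x - Y n) + (x - Y k)))^2" by simp
    moreover have "(norm ((x - Y n) + (x - Y k)))^2 + (norm (Y n - Y k))^2
        = 2 * (norm (x - Y n))^2 + 2 * (norm (x - Y k))^2"
      using parallelogram[of "x - Y n" "x - Y k"] by (simp add: norm_minus_commute)
    ultimately show ?thesis using Y(2)[of n] Y(2)[of k] by linarith
  qed
  have "Cauchy Y"
  proof (rule metric_CauchyI)
    fix e :: real assume e: "0 < e"
    obtain N :: nat where N: "4 / e^2 < real N" using reals_Archimedean2 by blast
    have "dist (Y m) (Y n) < e" if "N \<le> m" "N \<le> n" for m n
    proof -
      have e2: "0 < e^2" using e by simp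
      have "2 / real (Suc m) \<le> 2 / real (Suc N)" "2 / real (Suc n) \<le> 2 / real (Suc N)"
        using that by (intro divide_left_mono; simp)+
      moreover have "4 / real (Suc N) < e^2"
      proof -
        have "4 / e^2 < real (Suc N)" using N by simp
        then have "4 < real (Suc N) * e^2" using e2 by (simp add: divide_less_eq)
        then show ?thesis by (simp add: divide_less_eq mult.commute)
      qed
      ultimately have "(dist (Y m) (Y n))^2 < e^2"
        using bound[of m n] by (simp add: dist_norm)
      then show ?thesis using e by (simp add: power_less_imp_less_base)
    qed
    then show "\<exists>M. \<forall>m\<ge>M. \<forall>n\<ge>M. dist (Y m) (Y n) < e" by blast
  qed
  then obtain p where lim: "Y \<longlonglongrightarrow> p" using Cauchy_convergent_iff convergent_def by blast
  have pM: "p \<in> M" using closed_sequentially[OF cl] Y(1) lim by blast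
  have "(\<lambda>n. (norm (x - Y n))^2) \<longlonglongrightarrow> (norm (x - p))^2"
    by (intro tendsto_intros lim)
  moreover have "(\<lambda>n. d^2 + 1 / real (Suc n)) \<longlonglongrightarrow> d^2 + 0"
    by (intro tendsto_intros LIMSEQ_inverse_real_of_nat[unfolded inverse_eq_divide])
  ultimately have "(norm (x - p))^2 \<le> d^2 + 0"
    by (rule LIMSEQ_le) (use Y(2) less_imp_le in blast)
  then have min: "(norm (x - p))^2 \<le> (norm (x - y))^2" if "y \<in> M" for y
    using dle[OF that] d0 by (smt (verit) power_mono)
  have "cinner (x - p) y = 0" if yM: "y \<in> M" for y
  proof -
    define c where "c = cinner (x - p) y"
    define s where "s = 1 / ((norm y)^2 + 1)"
    have ny1: "0 < (norm y)^2 + 1" by (simp add: add_nonneg_pos)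
    have s0: "0 < s" unfolding s_def using ny1 by simp
    have sy: "s * (norm y)^2 < 1" unfolding s_def using ny1 by (simp add: field_simps)
    have "p + (complex_of_real s * c) *\<^sub>C y \<in> M" using pM yM sub by (simp add: csubspace_add csubspace_scaleC)
    from min[OF this] have
      "(norm (x - p))^2 \<le> (norm ((x - p) - (complex_of_real s * c) *\<^sub>C y))^2"
      by (simp add: algebra_simps)
    also have "\<dots> = (norm (x - p))^2 + (s * cmod c)^2 * (norm y)^2 - 2 * s * (cmod c)^2"
    proof -
      have "cinner (x - p) ((complex_of_real s * c) *\<^sub>C y) = of_real (s * (cmod c)^2)"
        by (simp add: cinner_scaleC_right c_def[symmetric] mult.assoc mult.commute[of "cnj c"] complex_norm_square[symmetric])
      then show ?thesis using s0 by (simp add: norm_diff_sq norm_scaleC norm_mult power_mult_distrib)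
    qed
    finally have "0 \<le> s * (cmod c)^2 * (s * (norm y)^2 - 2)"
      by (simp add: power_mult_distrib algebra_simps power2_eq_square)
    moreover have "s * (norm y)^2 - 2 < 0" using sy by simp
    ultimately have "s * (cmod c)^2 \<le> 0" by (simp add: mult_le_0_iff zero_le_mult_iff)
    then have "cmod c = 0" using s0 by (simp add: mult_le_0_iff)
    then show ?thesis unfolding c_def by simp
  qed
  then show ?thesis using pM by blast
qed



lemma lin_diff:
  assumes "csubspace M" "\<And>x y. x\<in>M \<Longrightarrow> y\<in>M \<Longrightarrow> f (x+y) = f x + f y"
    "\<And>c x. x\<in>M \<Longrightarrow> f (c *\<^sub>C x) = c * f x" "x \<in> M" "y \<in> M"
  shows "f (x - y) = f x - f y"
proof -
  have "f (x - y) = f (x + (-1) *\<^sub>C y)" by (simp add: scaleC_minus1)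
  also have "\<dots> = f x + (-1) * f y" using assms by (simp add: csubspace_scaleC)
  finally show ?thesis by simp
qed

lemma cinner_unique:
  fixes b1 b2 :: "'a::complex_inner"
  assumes "csubspace M" "b1 \<in> M" "b2 \<in> M" "\<And>v. v \<in> M \<Longrightarrow> cinner b1 v = cinner b2 v"
  shows "b1 = b2"
proof -
  have "cinner b1 (b1 - b2) = cinner b2 (b1 - b2)" using assms by (simp add: csubspace_diff)
  then have "cinner (b1 - b2) (b1 - b2) = 0" by (simp add: cinner_diff_left)
  then show ?thesis by (simp add: cinner_self_eq_zero)
qed

lemma riesz:
  fixes M :: "'a::chilbert set" and \<phi> :: "'a \<Rightarrow> complex"
  assumes sub: "csubspace M" and cl: "closed M"
    and add: "\<And>x y. x\<in>M \<Longrightarrow> y\<in>M \<Longrightarrow> \<phi> (x+y) = \<phi> x + \<phi> y"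
    and sc: "\<And>c x. x\<in>M \<Longrightarrow> \<phi> (c *\<^sub>C x) = c * \<phi> x"
    and bd: "\<And>x. x\<in>M \<Longrightarrow> norm (\<phi> x) \<le> K * norm x"
  shows "\<exists>g\<in>M. \<forall>v\<in>M. \<phi> v = cinner v g"
proof (cases "\<forall>v\<in>M. \<phi> v = 0")
  case True
  then show ?thesis using csubspace_0[OF sub] by (intro bexI[of _ 0]) auto
next
  case False
  then obtain x0 where x0: "x0 \<in> M" "\<phi> x0 \<noteq> 0" by blast
  have phi0: "\<phi> 0 = 0" using sc[of 0 0] csubspace_0[OF sub] by simp
  have diff: "\<phi> (x - y) = \<phi> x - \<phi> y" if "x \<in> M" "y \<in> M" for x y
    by (rule lin_diff[OF sub add sc that])
  define N where "N = {v\<in>M. \<phi> v = 0}"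
  have subN: "csubspace N" unfolding csubspace_def N_def
    using sub csubspace_0[OF sub] phi0 add sc by (auto simp: csubspace_add csubspace_scaleC)
  have clN: "closed N" unfolding closed_sequential_limits
  proof (intro allI impI)
    fix X l assume h: "(\<forall>n. X n \<in> N) \<and> X \<longlonglongrightarrow> l"
    then have lM: "l \<in> M" using closed_sequentially[OF cl] by (auto simp: N_def)
    have "(\<lambda>n. norm (\<phi> l)) \<longlonglongrightarrow> norm (\<phi> l)" by simp
    moreover have "(\<lambda>n. K * norm (l - X n)) \<longlonglongrightarrow> K * norm (l - l)"
      using h by (intro tendsto_intros) auto
    moreover have "\<forall>n. norm (\<phi> l) \<le> K * norm (l - X n)"
    proof
      fix n
      have "X n \<in> M" "\<phi> (X n) = 0" using h by (auto simp: N_def)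
      then have "\<phi> l = \<phi> (l - X n)" using diff[OF lM] by simp
      then show "norm (\<phi> l) \<le> K * norm (l - X n)" using bd[of "l - X n"] lM \<open>X n \<in> M\<close>
        by (simp add: csubspace_diff[OF sub])
    qed
    ultimately have "norm (\<phi> l) \<le> K * norm (l - l)" by (intro LIMSEQ_le) auto
    then show "l \<in> N" using lM by (simp add: N_def)
  qed
  obtain p where p: "p \<in> N" "\<forall>y\<in>N. cinner (x0 - p) y = 0"
    using projection_exists[OF subN clN] by blast
  define z where "z = x0 - p"
  have pM: "p \<in> M" "\<phi> p = 0" using p by (auto simp: N_def)
  have zM: "z \<in> M" unfolding z_def using x0 pM sub by (simp add: csubspace_diff)
  have phiz: "\<phi> z = \<phi> x0" unfolding z_def using diff[OF x0(1) pM(1)] pM by simp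
  have z0: "z \<noteq> 0" using phiz phi0 x0 by auto
  have zz: "cinner z z \<noteq> 0" using z0 by (simp add: cinner_self_eq_zero)
  define g where "g = cnj (\<phi> z / cinner z z) *\<^sub>C z"
  have "\<phi> v = cinner v g" if vM: "v \<in> M" for v
  proof -
    define w where "w = v - (\<phi> v / \<phi> z) *\<^sub>C z"
    have wM: "w \<in> M" unfolding w_def using vM zM sub by (simp add: csubspace_diff csubspace_scaleC)
    have "\<phi> w = \<phi> v - (\<phi> v / \<phi> z) * \<phi> z" unfolding w_def
      using diff[OF vM csubspace_scaleC[OF sub zM]] sc[OF zM] by simp
    then have "\<phi> w = 0" using phiz x0 by simp
    then have "w \<in> N" using wM by (simp add: N_def)
    then have "cinner z w = 0" using p(2) z_def by simp
    then have "cinner w z = 0" using cinner_commute[of w z] by simp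
    then have "cinner v z = (\<phi> v / \<phi> z) * cinner z z"
      unfolding w_def by (simp add: cinner_diff_left cinner_scaleC_left)
    have pz: "\<phi> z \<noteq> 0" using phiz x0 by simp
    have "cinner v g = (\<phi> z / cinner z z) * cinner v z" unfolding g_def by (simp add: cinner_scaleC_right)
    also have "\<dots> = (\<phi> z / cinner z z) * ((\<phi> v / \<phi> z) * cinner z z)" using \<open>cinner v z = _\<close> by simp
    also have "\<dots> = \<phi> v" using zz pz by simp
    finally show ?thesis by simp
  qed
  moreover have "g \<in> M" using zM sub by (simp add: g_def csubspace_scaleC)
  ultimately show ?thesis by blast
qed

lemma lax_milgram:
  fixes M :: "'a::chilbert set" and \<beta> :: "'a \<Rightarrow> 'a \<Rightarrow> complex" and \<psi> :: "'a \<Rightarrow> complex"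
  assumes sub: "csubspace M" and cl: "closed M"
    and badd: "\<And>x y v. \<beta> (x + y) v = \<beta> x v + \<beta> y v"
    and bsc: "\<And>c x v. \<beta> (c *\<^sub>C x) v = c * \<beta> x v"
    and badd2: "\<And>u v w. \<beta> u (v + w) = \<beta> u v + \<beta> u w"
    and bsc2: "\<And>c u v. \<beta> u (c *\<^sub>C v) = cnj c * \<beta> u v"
    and bbd: "\<And>u v. norm (\<beta> u v) \<le> C * norm u * norm v"
    and coer: "\<And>u. u \<in> M \<Longrightarrow> \<mu> * (norm u)^2 \<le> Re (\<beta> u u)" and mu: "\<mu> > 0"
    and padd: "\<And>v w. \<psi> (v + w) = \<psi> v + \<psi> w"
    and psc: "\<And>c v. \<psi> (c *\<^sub>C v) = cnj c * \<psi> v"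
    and pbd: "\<And>v. norm (\<psi> v) \<le> K * norm v"
  shows "\<exists>w\<in>M. \<forall>v\<in>M. \<beta> w v = \<psi> v"
proof -
  obtain g where g: "g \<in> M" "\<forall>v\<in>M. cnj (\<psi> v) = cinner v g"
    using riesz[OF sub cl, of "\<lambda>v. cnj (\<psi> v)" K] padd psc pbd by auto
  have gpsi: "\<psi> v = cinner g v" if "v \<in> M" for v
  proof -
    have "cnj (\<psi> v) = cinner v g" using g(2) that by blast
    then have "\<psi> v = cnj (cinner v g)" by (metis complex_cnj_cnj)
    then show ?thesis using cinner_commute[of g v] by simp
  qed
  have ex1: "\<exists>b\<in>M. \<forall>v\<in>M. cnj (\<beta> u v) = cinner v b" for u
    using riesz[OF sub cl, of "\<lambda>v. cnj (\<beta> u v)" "C * norm u"] badd2 bsc2 bbd by auto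
  then have "\<exists>b\<in>M. \<forall>v\<in>M. \<beta> u v = cinner b v" for u
  proof -
    obtain b where "b \<in> M" "\<forall>v\<in>M. cnj (\<beta> u v) = cinner v b" using ex1[of u] by blast
    then have "\<forall>v\<in>M. \<beta> u v = cinner b v"
      by (metis cinner_commute complex_cnj_cnj)
    then show ?thesis using \<open>b \<in> M\<close> by blast
  qed
  then obtain B where B: "\<And>u. B u \<in> M" "\<And>u v. v \<in> M \<Longrightarrow> \<beta> u v = cinner (B u) v"
    by metis
  define C1 where "C1 = max C \<mu>"
  have C1: "C1 > 0" "\<mu> \<le> C1" "C \<le> C1" using mu by (auto simp: C1_def)
  have bdiff: "\<beta> (x - y) v = \<beta> x v - \<beta> y v" for x y v
  proof -
    have "\<beta> (x - y) v = \<beta> (x + (-1) *\<^sub>C y) v" by (simp add: scaleC_minus1)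
    also have "\<dots> = \<beta> x v - \<beta> y v" by (simp add: badd bsc)
    finally show ?thesis .
  qed
  define \<rho> where "\<rho> = \<mu> / C1^2"
  define q where "q = 1 - \<mu>^2 / C1^2"
  have q: "0 \<le> q" "q < 1"
  proof -
    have "\<mu>^2 \<le> C1^2" using C1 mu by (simp add: power_mono)
    then show "0 \<le> q" using C1 by (simp add: q_def field_simps)
    show "q < 1" using C1 mu by (simp add: q_def)
  qed
  define T where "T u = u - \<rho> *\<^sub>R (B u - g)" for u
  have TM: "T ` M \<subseteq> M" using B(1) g(1) sub by (auto simp: T_def csubspace_diff csubspace_scaleR)
  have lip: "dist (T u1) (T u2) \<le> sqrt q * dist u1 u2" if "u1 \<in> M" "u2 \<in> M" for u1 u2
  proof -
    define d where "d = u1 - u2"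
    define Bd where "Bd = B u1 - B u2"
    have dM: "d \<in> M" "Bd \<in> M" using that B(1) sub by (auto simp: d_def Bd_def csubspace_diff)
    have repr: "\<beta> d v = cinner Bd v" if "v \<in> M" for v
      using that by (simp add: d_def Bd_def bdiff B(2) cinner_diff_left)
    have TT: "T u1 - T u2 = d - \<rho> *\<^sub>R Bd" by (simp add: T_def d_def Bd_def algebra_simps)
    have nBd: "norm Bd \<le> C1 * norm d"
    proof (cases "Bd = 0")
      case True then show ?thesis using C1 by simp
    next
      case False
      have "(norm Bd)^2 = Re (cinner Bd Bd)" by (rule norm_sq_cinner)
      also have "\<dots> = Re (\<beta> d Bd)" using repr[OF dM(2)] by simp
      also have "\<dots> \<le> norm (\<beta> d Bd)" by (rule complex_Re_le_cmod)
      also have "\<dots> \<le> C * norm d * norm Bd" by (rule bbd)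
      also have "\<dots> \<le> C1 * norm d * norm Bd" using C1 by (simp add: mult_right_mono)
      finally have "norm Bd * norm Bd \<le> (C1 * norm d) * norm Bd" by (simp add: power2_eq_square)
      then show ?thesis using False by simp
    qed
    have ReBd: "\<mu> * (norm d)^2 \<le> Re (cinner d Bd)"
    proof -
      have "Re (cinner d Bd) = Re (cinner Bd d)" by (subst cinner_commute) simp
      also have "\<dots> = Re (\<beta> d d)" using repr[OF dM(1)] by simp
      finally show ?thesis using coer[OF dM(1)] by simp
    qed
    have "(norm (d - \<rho> *\<^sub>R Bd))^2 = (norm d)^2 + \<rho>^2 * (norm Bd)^2 - 2 * \<rho> * Re (cinner d Bd)"
      by (simp add: norm_diff_sq cinner_scaleR_right power_mult_distrib)
    also have "\<dots> \<le> (norm d)^2 + \<rho>^2 * (C1 * norm d)^2 - 2 * \<rho> * (\<mu> * (norm d)^2)"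
    proof -
      have r0: "0 \<le> \<rho>" using mu C1 by (simp add: \<rho>_def)
      have "(norm Bd)^2 \<le> (C1 * norm d)^2" using nBd by (simp add: power_mono)
      then have "\<rho>^2 * (norm Bd)^2 \<le> \<rho>^2 * (C1 * norm d)^2" by (simp add: mult_left_mono)
      moreover have "2 * \<rho> * (\<mu> * (norm d)^2) \<le> 2 * \<rho> * Re (cinner d Bd)"
        using ReBd r0 by (simp add: mult_left_mono)
      ultimately show ?thesis by linarith
    qed
    also have "\<dots> = q * (norm d)^2"
      using C1 by (simp add: q_def \<rho>_def power2_eq_square field_simps)
    finally have "(norm (d - \<rho> *\<^sub>R Bd))^2 \<le> (sqrt q * norm d)^2"
      using q by (simp add: power_mult_distrib)
    then have "norm (d - \<rho> *\<^sub>R Bd) \<le> sqrt q * norm d"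
      using q by (meson norm_ge_zero power2_le_imp_le real_sqrt_ge_zero zero_le_mult_iff)
    then show ?thesis by (simp add: dist_norm TT d_def)
  qed
  have "complete M" using cl by (simp add: complete_eq_closed)
  moreover have "M \<noteq> {}" using csubspace_0[OF sub] by blast
  ultimately obtain w where w: "w \<in> M" "T w = w"
    using Banach_fix[of M "sqrt q" T] q TM lip by (auto simp: real_sqrt_lt_1_iff)
  have "\<rho> *\<^sub>R (B w - g) = 0" using w(2) by (simp add: T_def)
  moreover have "\<rho> \<noteq> 0" using mu C1 by (simp add: \<rho>_def)
  ultimately have "B w = g" by simp
  then have "\<forall>v\<in>M. \<beta> w v = \<psi> v" using B(2) gpsi by simp
  then show ?thesis using w(1) by blast
qed



lemma dense_orth_zero:
  fixes d :: "'a::complex_inner"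
  assumes "closure S = UNIV" "\<And>x. x \<in> S \<Longrightarrow> cinner x d = 0"
  shows "d = 0"
proof -
  have "S \<subseteq> {x. cinner x d = 0}" using assms(2) by blast
  then have "closure S \<subseteq> {x. cinner x d = 0}" using closed_cinner_eq by (rule closure_minimal)
  then have "cinner d d = 0" using assms(1) by blast
  then show ?thesis by (simp add: cinner_self_eq_zero)
qed

lemma adj_unique:
  assumes "closure S = UNIV" "\<forall>x\<in>S. cinner (T x) y = cinner x z1" "\<forall>x\<in>S. cinner (T x) y = cinner x z2"
  shows "z1 = z2"
proof -
  have "\<And>x. x \<in> S \<Longrightarrow> cinner x (z1 - z2) = 0" using assms by (simp add: cinner_diff_right)
  then have "z1 - z2 = 0" using dense_orth_zero assms(1) by blast
  then show ?thesis by simp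
qed

lemma adj_eq:
  assumes "densely_defined S T" "\<forall>x\<in>S. cinner (T x) y = cinner x z"
  shows "y \<in> adj_dom S T" "adj S T y = z"
proof -
  show "y \<in> adj_dom S T" using assms(2) by (auto simp: adj_dom_def)
  have cl: "closure S = UNIV" using assms(1) by (simp add: densely_defined_def)
  show "adj S T y = z" unfolding adj_def
  proof (rule the_equality)
    show "\<forall>x\<in>S. cinner (T x) y = cinner x z" by (rule assms(2))
  next
    fix z' assume "\<forall>x\<in>S. cinner (T x) y = cinner x z'"
    then show "z' = z" using adj_unique[OF cl _ assms(2)] by blast
  qed
qed

lemma adj_prop:
  assumes "densely_defined S T" "y \<in> adj_dom S T" "x \<in> S"
  shows "cinner (T x) y = cinner x (adj S T y)"
proof -
  obtain z where z: "\<forall>x\<in>S. cinner (T x) y = cinner x z" using assms(2) by (auto simp: adj_dom_def)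
  then have "adj S T y = z" using adj_eq[OF assms(1)] by blast
  then show ?thesis using z assms(3) by simp
qed

lemma csubspace_adj_dom: "csubspace (adj_dom S T)"
  unfolding csubspace_def adj_dom_def
proof (intro conjI ballI allI)
  show "0 \<in> {y. \<exists>z. \<forall>x\<in>S. cinner (T x) y = cinner x z}" by (auto intro: exI[of _ 0])
next
  fix y1 y2 assume "y1 \<in> {y. \<exists>z. \<forall>x\<in>S. cinner (T x) y = cinner x z}" "y2 \<in> {y. \<exists>z. \<forall>x\<in>S. cinner (T x) y = cinner x z}"
  then obtain z1 z2 where "\<forall>x\<in>S. cinner (T x) y1 = cinner x z1" "\<forall>x\<in>S. cinner (T x) y2 = cinner x z2" by blast
  then show "y1 + y2 \<in> {y. \<exists>z. \<forall>x\<in>S. cinner (T x) y = cinner x z}"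
    by (auto simp: cinner_add_right intro!: exI[of _ "z1 + z2"])
next
  fix c y1 assume "y1 \<in> {y. \<exists>z. \<forall>x\<in>S. cinner (T x) y = cinner x z}"
  then obtain z1 where "\<forall>x\<in>S. cinner (T x) y1 = cinner x z1" by blast
  then show "c *\<^sub>C y1 \<in> {y. \<exists>z. \<forall>x\<in>S. cinner (T x) y = cinner x z}"
    by (auto simp: cinner_scaleC_right intro!: exI[of _ "c *\<^sub>C z1"])
qed

lemma lin_op_add: "lin_op S T \<Longrightarrow> x \<in> S \<Longrightarrow> y \<in> S \<Longrightarrow> T (x + y) = T x + T y"
  by (simp add: lin_op_def clinear_on_def)
lemma lin_op_scaleC: "lin_op S T \<Longrightarrow> x \<in> S \<Longrightarrow> T (c *\<^sub>C x) = c *\<^sub>C T x"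
  by (simp add: lin_op_def clinear_on_def)
lemma lin_op_sub: "lin_op S T \<Longrightarrow> csubspace S" by (simp add: lin_op_def)
lemma lin_op_diff: "lin_op S T \<Longrightarrow> x \<in> S \<Longrightarrow> y \<in> S \<Longrightarrow> T (x - y) = T x - T y"
proof -
  assume a: "lin_op S T" "x \<in> S" "y \<in> S"
  have "T (x - y) = T (x + (-1) *\<^sub>C y)" by (simp add: scaleC_minus1)
  also have "\<dots> = T x + (-1) *\<^sub>C T y" using a
    by (simp add: lin_op_add lin_op_scaleC csubspace_scaleC lin_op_sub)
  finally show ?thesis by (simp add: scaleC_minus1)
qed
lemma lin_op_zero: "lin_op S T \<Longrightarrow> T 0 = 0"
proof -
  assume a: "lin_op S T"
  have "0 \<in> S" using csubspace_0[OF lin_op_sub[OF a]] .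
  then show ?thesis using lin_op_diff[OF a, of 0 0] by simp
qed

lemma graph_inner_pair: "graph_inner T x y = cinner (x, T x) (y, T y)"
  by (simp add: graph_inner_def cinner_Pair)

lemma graph_norm_pair: "graph_norm T x = norm (x, T x)"
  by (simp add: graph_norm_def graph_inner_pair norm_eq_sqrt_cinner)

lemma graph_inner_commute: "graph_inner T x y = cnj (graph_inner T y x)"
  by (simp add: graph_inner_pair cinner_commute[of "(x, T x)"])

lemma graph_inner_self_zero: "graph_inner T x x = 0 \<Longrightarrow> x = 0"
  by (simp add: graph_inner_pair cinner_self_eq_zero zero_prod_def)

lemma graph_inner_diff_left:
  "lin_op S T \<Longrightarrow> x \<in> S \<Longrightarrow> y \<in> S \<Longrightarrow> graph_inner T (x - y) v = graph_inner T x v - graph_inner T y v"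
  by (simp add: graph_inner_def lin_op_diff cinner_diff_left)

lemma graph_csubspace:
  assumes "lin_op S T" "csubspace E" "E \<subseteq> S"
  shows "csubspace {(x, T x) | x. x \<in> E}"
  unfolding csubspace_def
proof (intro conjI ballI allI)
  have "T 0 = 0" using assms lin_op_zero by blast
  then show "0 \<in> {(x, T x) | x. x \<in> E}" using csubspace_0[OF assms(2)] by (auto simp: zero_prod_def)
next
  fix P Q assume "P \<in> {(x, T x) | x. x \<in> E}" "Q \<in> {(x, T x) | x. x \<in> E}"
  then obtain x y where xy: "P = (x, T x)" "Q = (y, T y)" "x \<in> E" "y \<in> E" by blast
  then have "x \<in> S" "y \<in> S" using assms(3) by auto
  then have "T (x + y) = T x + T y" using lin_op_add[OF assms(1)] by blast
  moreover have "x + y \<in> E" using xy assms(2) by (simp add: csubspace_add)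
  ultimately show "P + Q \<in> {(x, T x) | x. x \<in> E}" using xy by (auto intro!: exI[of _ "x + y"])
next
  fix c P assume "P \<in> {(x, T x) | x. x \<in> E}"
  then obtain x where "P = (x, T x)" "x \<in> E" by blast
  then have "x \<in> S" using assms(3) by auto
  then have "T (c *\<^sub>C x) = c *\<^sub>C T x" using lin_op_scaleC[OF assms(1)] by blast
  moreover have "c *\<^sub>C x \<in> E" using \<open>x \<in> E\<close> assms(2) by (simp add: csubspace_scaleC)
  ultimately show "c *\<^sub>C P \<in> {(x, T x) | x. x \<in> E}" using \<open>P = _\<close>
    by (auto simp: scaleC_Pair intro!: exI[of _ "c *\<^sub>C x"])
qed

lemma von_neumann:
  fixes S :: "'a::chilbert set" and T :: "'a \<Rightarrow> 'b::chilbert"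
  assumes dd: "densely_defined S T" and cl: "closed_op S T"
    and h: "\<forall>y\<in>adj_dom S T. cinner (adj S T y) x = cinner y w"
  shows "x \<in> S \<and> T x = w"
proof -
  have lin: "lin_op S T" using dd by (simp add: densely_defined_def)
  define \<Gamma> where "\<Gamma> = {(x, T x) | x. x \<in> S}"
  have sub: "csubspace \<Gamma>" unfolding \<Gamma>_def using graph_csubspace[OF lin lin_op_sub[OF lin]] by simp
  have clG: "closed \<Gamma>" using cl by (simp add: closed_op_def \<Gamma>_def)
  obtain P where P: "P \<in> \<Gamma>" "\<forall>Y\<in>\<Gamma>. cinner ((x, w) - P) Y = 0"
    using projection_exists[OF sub clG] by blast
  then obtain p where p: "p \<in> S" "P = (p, T p)" by (auto simp: \<Gamma>_def)
  define q where "q = x - p"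
  define r where "r = w - T p"
  have orth: "cinner q x' + cinner r (T x') = 0" if "x' \<in> S" for x'
    using P(2) that p by (auto simp: \<Gamma>_def q_def r_def cinner_Pair)
  have "cinner (T x') r = cinner x' (- q)" if "x' \<in> S" for x'
  proof -
    have "cinner (T x') r = cnj (cinner r (T x'))" by (rule cinner_commute)
    also have "\<dots> = cnj (- cinner q x')"
    proof -
      have "cinner r (T x') = - cinner q x'" using orth[OF that] by (simp add: eq_neg_iff_add_eq_0 add.commute)
      then show ?thesis by simp
    qed
    also have "\<dots> = - cinner x' q" by (simp add: cinner_commute[of q x'])
    finally show ?thesis by (simp add: cinner_minus_right)
  qed
  then have ra: "r \<in> adj_dom S T" "adj S T r = - q" using adj_eq[OF dd] by blast+
  have h1: "- cinner q x = cinner r w"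
  proof -
    have "cinner (adj S T r) x = cinner r w" using h ra(1) by blast
    then show ?thesis using ra(2) by (simp add: cinner_minus_left)
  qed
  have h2: "cinner q p + cinner r (T p) = 0" using orth p(1) by blast
  have "cinner q q + cinner r r = (cinner q x + cinner r w) - (cinner q p + cinner r (T p))"
    by (simp add: q_def r_def cinner_diff_right)
  also have "\<dots> = 0" using h1 h2 by (metis add.right_inverse diff_zero add.commute)
  finally have "Re (cinner q q) + Re (cinner r r) = 0" by (metis plus_complex.sel(1) zero_complex.sel(1))
  then have "q = 0" "r = 0" using cinner_sum_self_eq_zero by blast+
  then show ?thesis using p by (simp add: q_def r_def)
qed



lemma adj_graph_closed:
  assumes dd: "densely_defined S' T'" and hT: "\<forall>x\<in>adj_dom S' T'. T x = - adj S' T' x"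
  shows "closed {(x, T x) | x. x \<in> adj_dom S' T'}"
proof -
  have eq: "{(x, T x) | x. x \<in> adj_dom S' T'} = (\<Inter>s\<in>S'. {P. cinner (T' s) (fst P) = cinner s (- snd P)})"
  proof (intro equalityI subsetI)
    fix P assume "P \<in> {(x, T x) | x. x \<in> adj_dom S' T'}"
    then obtain x where x: "P = (x, T x)" "x \<in> adj_dom S' T'" by blast
    have "adj S' T' x = - T x" using hT x(2) by simp
    then show "P \<in> (\<Inter>s\<in>S'. {P. cinner (T' s) (fst P) = cinner s (- snd P)})"
      using adj_prop[OF dd x(2)] x(1) by auto
  next
    fix P assume "P \<in> (\<Inter>s\<in>S'. {P. cinner (T' s) (fst P) = cinner s (- snd P)})"
    then have "\<forall>s\<in>S'. cinner (T' s) (fst P) = cinner s (- snd P)" by blast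
    then have a: "fst P \<in> adj_dom S' T'" "adj S' T' (fst P) = - snd P" using adj_eq[OF dd] by blast+
    then have "T (fst P) = snd P" using hT by simp
    then show "P \<in> {(x, T x) | x. x \<in> adj_dom S' T'}" using a(1) by (intro CollectI exI[of _ "fst P"]) auto
  qed
  have "closed {P. cinner (T' s) (fst P) = cinner s (- snd P)}" for s
    by (intro closed_Collect_eq continuous_on_cinner continuous_on_const continuous_on_fst
        continuous_on_snd continuous_on_minus continuous_on_id)
  then show ?thesis unfolding eq by (intro closed_INT) auto
qed

lemma orth_proj_eq:
  assumes lin: "lin_op S T" and uS: "u \<in> S"
    and pB: "p \<in> {v\<in>S. \<forall>e\<in>E. graph_inner T v e = 0}"
    and orth: "\<forall>w\<in>{v\<in>S. \<forall>e\<in>E. graph_inner T v e = 0}. graph_inner T (u - p) w = 0"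
  shows "orth_proj T {v\<in>S. \<forall>e\<in>E. graph_inner T v e = 0} u = p"
  unfolding orth_proj_def
proof (rule the_equality)
  show "p \<in> {v\<in>S. \<forall>e\<in>E. graph_inner T v e = 0} \<and> (\<forall>w\<in>{v\<in>S. \<forall>e\<in>E. graph_inner T v e = 0}. graph_inner T (u - p) w = 0)"
    using pB orth by blast
next
  fix p' assume h: "p' \<in> {v\<in>S. \<forall>e\<in>E. graph_inner T v e = 0} \<and> (\<forall>w\<in>{v\<in>S. \<forall>e\<in>E. graph_inner T v e = 0}. graph_inner T (u - p') w = 0)"
  have sub: "csubspace S" using lin by (rule lin_op_sub)
  have pS: "p \<in> S" "p' \<in> S" using pB h by auto
  have dB: "p - p' \<in> {v\<in>S. \<forall>e\<in>E. graph_inner T v e = 0}"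
    using pB h pS sub by (auto simp: graph_inner_diff_left[OF lin] csubspace_diff)
  have "graph_inner T (p - p') w = graph_inner T (u - p') w - graph_inner T (u - p) w" for w
  proof -
    have "p - p' = (u - p') - (u - p)" by simp
    then show ?thesis using graph_inner_diff_left[OF lin, of "u - p'" "u - p" w] uS pS sub
      by (simp add: csubspace_diff)
  qed
  then have "graph_inner T (p - p') (p - p') = 0" using h orth dB by simp
  then have "p - p' = 0" by (rule graph_inner_self_zero)
  then show "p' = p" by simp
qed

lemma decomp:
  fixes S :: "'a::chilbert set" and T :: "'a \<Rightarrow> 'b::chilbert"
  assumes lin: "lin_op S T" and ES: "E \<subseteq> S" and subE: "csubspace E"
    and clE: "closed {(x, T x) | x. x \<in> E}" and uS: "u \<in> S"
  shows "orth_proj T {v\<in>S. \<forall>e\<in>E. graph_inner T v e = 0} u \<in> {v\<in>S. \<forall>e\<in>E. graph_inner T v e = 0}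
    \<and> u - orth_proj T {v\<in>S. \<forall>e\<in>E. graph_inner T v e = 0} u \<in> E"
proof -
  define M where "M = {(x, T x) | x. x \<in> E}"
  have subM: "csubspace M" unfolding M_def by (rule graph_csubspace[OF lin subE ES])
  obtain P where P: "P \<in> M" "\<forall>Y\<in>M. cinner ((u, T u) - P) Y = 0"
    using projection_exists[OF subM clE[folded M_def]] by blast
  then obtain e where e: "e \<in> E" "P = (e, T e)" by (auto simp: M_def)
  have sub: "csubspace S" using lin by (rule lin_op_sub)
  define q where "q = u - e"
  have eS: "e \<in> S" using e ES by auto
  have qS: "q \<in> S" using uS eS sub by (simp add: q_def csubspace_diff)
  have Tq: "T q = T u - T e" using lin_op_diff[OF lin uS eS] by (simp add: q_def)
  have qB: "q \<in> {v\<in>S. \<forall>e\<in>E. graph_inner T v e = 0}"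
  proof -
    have "graph_inner T q v = 0" if "v \<in> E" for v
    proof -
      have "(v, T v) \<in> M" using that by (auto simp: M_def)
      then have "cinner ((u, T u) - P) (v, T v) = 0" using P(2) by blast
      then show ?thesis using e(2) Tq by (simp add: graph_inner_pair q_def)
    qed
    then show ?thesis using qS by blast
  qed
  have orth: "\<forall>w\<in>{v\<in>S. \<forall>e\<in>E. graph_inner T v e = 0}. graph_inner T (u - q) w = 0"
  proof
    fix w assume "w \<in> {v\<in>S. \<forall>e\<in>E. graph_inner T v e = 0}"
    then have "graph_inner T w e = 0" using e(1) by blast
    then show "graph_inner T (u - q) w = 0" using graph_inner_commute[of T e w] by (simp add: q_def)
  qed
  have "orth_proj T {v\<in>S. \<forall>e\<in>E. graph_inner T v e = 0} u = q"
    by (rule orth_proj_eq[OF lin uS qB orth])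
  then show ?thesis using qB e(1) by (simp add: q_def)
qed



lemma graph_inner_add_left:
  "lin_op S T \<Longrightarrow> x \<in> S \<Longrightarrow> y \<in> S \<Longrightarrow> graph_inner T (x + y) v = graph_inner T x v + graph_inner T y v"
  by (simp add: graph_inner_def lin_op_add cinner_add_left)

lemma graph_inner_scaleC_left:
  "lin_op S T \<Longrightarrow> x \<in> S \<Longrightarrow> graph_inner T (c *\<^sub>C x) v = c * graph_inner T x v"
  by (simp add: graph_inner_def lin_op_scaleC cinner_scaleC_left distrib_left)

lemma csubspace_orth:
  assumes lin: "lin_op S T"
  shows "csubspace {v\<in>S. \<forall>e\<in>E. graph_inner T v e = 0}"
proof -
  have sub: "csubspace S" using lin by (rule lin_op_sub)
  have "T 0 = 0" using lin by (rule lin_op_zero)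
  then have "graph_inner T 0 e = 0" for e by (simp add: graph_inner_def)
  then show ?thesis unfolding csubspace_def using sub
    by (auto simp: csubspace_0 csubspace_add csubspace_scaleC graph_inner_add_left[OF lin]
        graph_inner_scaleC_left[OF lin])
qed

lemma graph_norm_sq: "(graph_norm T x)^2 = (norm x)^2 + (norm (T x))^2"
  by (simp add: graph_norm_pair norm_prod_def)

lemma lin_op_UNIV: "cbounded_linear f \<Longrightarrow> lin_op UNIV f"
  by (simp add: cbounded_linear_def lin_op_def csubspace_def)




theorem proposition3p6:
  fixes domG :: "'h0::chilbert set" and G :: "'h0 \<Rightarrow> 'h1::chilbert"
    and domD :: "'h1 set" and D :: "'h1 \<Rightarrow> 'h0"
    and \<kappa> :: "'h0 \<Rightarrow> 'h::chilbert"
    and a :: "'h1 \<Rightarrow> 'h1" and m :: "'h0 \<Rightarrow> 'h0"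
  assumes G_dd: "densely_defined domG G" and G_closed: "closed_op domG G"
    and D_dd: "densely_defined domD D" and D_closed: "closed_op domD D"
    and GD: "\<forall>y \<in> adj_dom domG G. y \<in> domD \<and> D y = - adj domG G y"
    and \<kappa>_lin: "clinear_on (BD_G domG G domD D) \<kappa>"
    and \<kappa>_bdd: "\<exists>K. \<forall>u \<in> BD_G domG G domD D. norm (\<kappa> u) \<le> K * graph_norm G u"
    and \<kappa>_inj: "inj_on \<kappa> (BD_G domG G domD D)"
    and \<kappa>_dense: "closure (\<kappa> ` BD_G domG G domD D) = UNIV"
    and a_bdd: "cbounded_linear a" and a_coer: "coercive_op a"
    and m_bdd: "cbounded_linear m" and m_coer: "coercive_op m"
  defines "b \<equiv> \<lambda>u v. cinner (a (G u)) (G v) + cinner (m u) v"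
    and "j \<equiv> \<lambda>u. \<kappa> (orth_proj G (BD_G domG G domD D) u)"
  shows "coercive_form domG G b \<and> continuous_form domG G b
    \<and> dtn_H domG G domD D a m \<kappa> = form_op domG b j"
proof -
  have linG: "lin_op domG G" using G_dd by (simp add: densely_defined_def)
  have linD: "lin_op domD D" using D_dd by (simp add: densely_defined_def)
  have subG: "csubspace domG" using linG by (rule lin_op_sub)
  have subD: "csubspace domD" using linD by (rule lin_op_sub)
  have alin: "lin_op UNIV a" using a_bdd by (rule lin_op_UNIV)
  have mlin: "lin_op UNIV m" using m_bdd by (rule lin_op_UNIV)
  obtain Ka where Ka: "\<And>x. norm (a x) \<le> Ka * norm x" using a_bdd by (auto simp: cbounded_linear_def)
  obtain Km where Km: "\<And>x. norm (m x) \<le> Km * norm x" using m_bdd by (auto simp: cbounded_linear_def)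
  obtain \<mu>a where \<mu>a: "\<mu>a > 0" "\<And>x. \<mu>a * (norm x)^2 \<le> Re (cinner (a x) x)"
    using a_coer by (auto simp: coercive_op_def)
  obtain \<mu>m where \<mu>m: "\<mu>m > 0" "\<And>x. \<mu>m * (norm x)^2 \<le> Re (cinner (m x) x)"
    using m_coer by (auto simp: coercive_op_def)
  have Ka': "norm (a x) \<le> \<bar>Ka\<bar> * norm x" for x
    using Ka[of x] abs_ge_self[of Ka] by (meson mult_right_mono norm_ge_zero order_trans)
  have Km': "norm (m x) \<le> \<bar>Km\<bar> * norm x" for x
    using Km[of x] abs_ge_self[of Km] by (meson mult_right_mono norm_ge_zero order_trans)
  define \<mu> where "\<mu> = min \<mu>a \<mu>m"
  have \<mu>: "\<mu> > 0" "\<mu> \<le> \<mu>a" "\<mu> \<le> \<mu>m" using \<mu>a \<mu>m by (auto simp: \<mu>_def)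
  define CC where "CC = \<bar>Ka\<bar> + \<bar>Km\<bar>"

  have coer_pt: "\<mu> * ((norm x)^2 + (norm y)^2) \<le> Re (cinner (a y) y) + Re (cinner (m x) x)" for x y
  proof -
    have "\<mu> * (norm y)^2 \<le> \<mu>a * (norm y)^2" using \<mu> by (simp add: mult_right_mono)
    moreover have "\<mu> * (norm x)^2 \<le> \<mu>m * (norm x)^2" using \<mu> by (simp add: mult_right_mono)
    ultimately show ?thesis using \<mu>a(2)[of y] \<mu>m(2)[of x] by (simp add: distrib_left)
  qed
  have cont_pt: "norm (cinner (a y) y' + cinner (m x) x') \<le> CC * norm (x, y) * norm (x', y')" for x y x' y'
  proof -
    have "norm (cinner (a y) y') \<le> norm (a y) * norm y'" by (rule cauchy_schwarz)
    also have "\<dots> \<le> (\<bar>Ka\<bar> * norm y) * norm y'"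
      using Ka'[of y] by (intro mult_right_mono) auto
    also have "\<dots> \<le> \<bar>Ka\<bar> * norm (x, y) * norm (x', y')"
      by (intro mult_mono mult_left_mono norm_snd_le) auto
    finally have 1: "norm (cinner (a y) y') \<le> \<bar>Ka\<bar> * norm (x, y) * norm (x', y')" .
    have "norm (cinner (m x) x') \<le> norm (m x) * norm x'" by (rule cauchy_schwarz)
    also have "\<dots> \<le> (\<bar>Km\<bar> * norm x) * norm x'"
      using Km'[of x] by (intro mult_right_mono) auto
    also have "\<dots> \<le> \<bar>Km\<bar> * norm (x, y) * norm (x', y')"
      by (intro mult_mono mult_left_mono norm_fst_le) auto
    finally have 2: "norm (cinner (m x) x') \<le> \<bar>Km\<bar> * norm (x, y) * norm (x', y')" .
    show ?thesis using norm_triangle_le[OF add_mono[OF 1 2]] by (simp add: CC_def algebra_simps)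
  qed
  have coercive: "coercive_form domG G b"
    unfolding coercive_form_def
  proof (intro exI[of _ \<mu>] conjI ballI)
    fix v assume "v \<in> domG"
    show "\<mu> * (graph_norm G v)^2 \<le> Re (b v v)"
      using coer_pt[where x=v and y="G v"] by (simp add: b_def graph_norm_sq)
  qed (rule \<mu>(1))
  have continuous: "continuous_form domG G b"
    unfolding continuous_form_def
    by (intro exI[of _ CC] ballI) (simp add: b_def graph_norm_pair cont_pt)

  define Ed where "Ed = adj_dom domD D"
  define Fg where "Fg = adj_dom domG G"
  define Ds where "Ds = adj domD D"
  define Gs where "Gs = adj domG G"
  define BG where "BG = BD_G domG G domD D"
  define BD where "BD = BD_D domG G domD D"
  have BG_eq: "BG = {v\<in>domG. \<forall>e\<in>Ed. graph_inner G v e = 0}" by (simp add: BG_def BD_G_def Ed_def)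
  have BD_eq: "BD = {v\<in>domD. \<forall>e\<in>Fg. graph_inner D v e = 0}" by (simp add: BD_def BD_D_def Fg_def)
  define \<pi> where "\<pi> = orth_proj G BG"
  define \<pi>D where "\<pi>D = orth_proj D BD"
  have GDs: "y \<in> domD" "D y = - Gs y" if "y \<in> Fg" for y using GD that by (auto simp: Fg_def Gs_def)
  have Dadj: "cinner (D w) y = cinner w (Ds y)" if "w \<in> domD" "y \<in> Ed" for w y
    using adj_prop[OF D_dd] that by (simp add: Ed_def Ds_def)
  have Gadj: "cinner (G v) y = cinner v (Gs y)" if "v \<in> domG" "y \<in> Fg" for v y
    using adj_prop[OF G_dd] that by (simp add: Fg_def Gs_def)
  have F1: "x \<in> domG \<and> G x = - Ds x" if xE: "x \<in> Ed" for x
  proof -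
    have "\<forall>y\<in>adj_dom domG G. cinner (adj domG G y) x = cinner y (- Ds x)"
    proof
      fix y assume "y \<in> adj_dom domG G"
      then have y: "y \<in> Fg" by (simp add: Fg_def)
      have "cinner (D y) x = cinner y (Ds x)" using Dadj[OF GDs(1)[OF y] xE] .
      then have "cinner (- Gs y) x = cinner y (Ds x)" using GDs(2)[OF y] by simp
      then show "cinner (adj domG G y) x = cinner y (- Ds x)"
        by (simp add: Gs_def cinner_minus_left cinner_minus_right minus_equation_iff[of "cinner _ x"])
    qed
    then show ?thesis using von_neumann[OF G_dd G_closed] by blast
  qed
  have EdG: "Ed \<subseteq> domG" using F1 by blast
  have GEd: "G x = - Ds x" if "x \<in> Ed" for x using F1 that by blast
  have FgD: "Fg \<subseteq> domD" using GDs by blast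
  have csubEd: "csubspace Ed" by (simp add: Ed_def csubspace_adj_dom)
  have csubFg: "csubspace Fg" by (simp add: Fg_def csubspace_adj_dom)
  have clEd: "closed {(x, G x) | x. x \<in> Ed}"
    unfolding Ed_def using GEd by (intro adj_graph_closed[OF D_dd]) (simp add: Ed_def Ds_def)
  have clFg: "closed {(x, D x) | x. x \<in> Fg}"
    unfolding Fg_def using GDs by (intro adj_graph_closed[OF G_dd]) (simp add: Fg_def Gs_def)
  have csubBG: "csubspace BG" unfolding BG_eq by (rule csubspace_orth[OF linG])
  have csubBD: "csubspace BD" unfolding BD_eq by (rule csubspace_orth[OF linD])
  have BGG: "BG \<subseteq> domG" using BG_eq by blast
  have BDD: "BD \<subseteq> domD" using BD_eq by blast
  have decG: "\<pi> u \<in> BG \<and> u - \<pi> u \<in> Ed" if "u \<in> domG" for u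
    using decomp[OF linG EdG csubEd clEd that] by (simp add: \<pi>_def BG_eq)
  have decD: "\<pi>D w \<in> BD \<and> w - \<pi>D w \<in> Fg" if "w \<in> domD" for w
    using decomp[OF linD FgD csubFg clFg that] by (simp add: \<pi>D_def BD_eq)
  have pi_eq: "\<pi> u = p" if "u \<in> domG" "p \<in> BG" "u - p \<in> Ed" for u p
  proof -
    have "\<forall>w\<in>BG. graph_inner G (u - p) w = 0"
    proof
      fix w assume "w \<in> BG"
      then have "graph_inner G w (u - p) = 0" using that(3) BG_eq by blast
      then show "graph_inner G (u - p) w = 0" using graph_inner_commute[of G "u - p" w] by simp
    qed
    then show ?thesis unfolding \<pi>_def BG_eq using orth_proj_eq[OF linG that(1)] that(2) BG_eq by blast
  qed
  have piD_orth: "graph_inner D (w - \<pi>D w) z = 0" if "w \<in> domD" "z \<in> BD" for w z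
  proof -
    have "graph_inner D z (w - \<pi>D w) = 0" using decD[OF that(1)] that(2) BD_eq by blast
    then show ?thesis using graph_inner_commute[of D "w - \<pi>D w" z] by simp
  qed
  have F3: "G v \<in> domD \<and> D (G v) = v" if vB: "v \<in> BG" for v
  proof -
    have "\<forall>y\<in>adj_dom domD D. cinner (adj domD D y) (G v) = cinner y v"
    proof
      fix y assume "y \<in> adj_dom domD D"
      then have y: "y \<in> Ed" by (simp add: Ed_def)
      have "graph_inner G v y = 0" using vB y BG_eq by blast
      then have "cinner v y + cinner (G v) (- Ds y) = 0" using GEd[OF y] by (simp add: graph_inner_def)
      then have "cinner v y = cinner (G v) (Ds y)" by (simp add: cinner_minus_right)
      then have "cinner y v = cinner (Ds y) (G v)" by (metis cinner_commute)
      then show "cinner (adj domD D y) (G v) = cinner y v" by (simp add: Ds_def)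
    qed
    then show ?thesis using von_neumann[OF D_dd D_closed] by blast
  qed
  have F3b: "G v \<in> BD" if vB: "v \<in> BG" for v
  proof -
    have vG: "v \<in> domG" using vB BGG by blast
    have "graph_inner D (G v) y = 0" if y: "y \<in> Fg" for y
    proof -
      have "graph_inner D (G v) y = cinner (G v) y + cinner v (- Gs y)"
        using F3[OF vB] GDs(2)[OF y] by (simp add: graph_inner_def)
      also have "\<dots> = 0" using Gadj[OF vG y] by (simp add: cinner_minus_right)
      finally show ?thesis .
    qed
    then show ?thesis using F3[OF vB] BD_eq by blast
  qed
  have F4: "D z \<in> BG \<and> G (D z) = z" if zB: "z \<in> BD" for z
  proof -
    have zD: "z \<in> domD" using zB BDD by blast
    have "\<forall>y\<in>adj_dom domG G. cinner (adj domG G y) (D z) = cinner y z"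
    proof
      fix y assume "y \<in> adj_dom domG G"
      then have y: "y \<in> Fg" by (simp add: Fg_def)
      have "graph_inner D z y = 0" using zB y BD_eq by blast
      then have "cinner z y + cinner (D z) (- Gs y) = 0" using GDs(2)[OF y] by (simp add: graph_inner_def)
      then have "cinner z y = cinner (D z) (Gs y)" by (simp add: cinner_minus_right)
      then have "cinner y z = cinner (Gs y) (D z)" by (metis cinner_commute)
      then show "cinner (adj domG G y) (D z) = cinner y z" by (simp add: Gs_def)
    qed
    then have 1: "D z \<in> domG" "G (D z) = z" using von_neumann[OF G_dd G_closed] by blast+
    have "graph_inner G (D z) x = 0" if x: "x \<in> Ed" for x
    proof -
      have "graph_inner G (D z) x = cinner (D z) x + cinner z (- Ds x)"
        using 1 GEd[OF x] by (simp add: graph_inner_def)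
      also have "\<dots> = 0" using Dadj[OF zD x] by (simp add: cinner_minus_right)
      finally show ?thesis .
    qed
    then show ?thesis using 1 BG_eq by blast
  qed
  have green: "cinner w (G v) + cinner (D w) v = graph_inner D (\<pi>D w) (G v)" if "w \<in> domD" "v \<in> BG" for w v
  proof -
    have pw: "\<pi>D w \<in> domD" using decD[OF that(1)] BDD by blast
    have "cinner w (G v) + cinner (D w) v = graph_inner D w (G v)"
      using F3[OF that(2)] by (simp add: graph_inner_def)
    also have "\<dots> = graph_inner D (\<pi>D w) (G v) + graph_inner D (w - \<pi>D w) (G v)"
      using graph_inner_diff_left[OF linD that(1) pw] by simp
    also have "graph_inner D (w - \<pi>D w) (G v) = 0" using piD_orth[OF that(1) F3b[OF that(2)]] .
    finally show ?thesis by simp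
  qed

  have adiff: "a (x - y) = a x - a y" for x y using lin_op_diff[OF alin] by simp
  have mdiff: "m (x - y) = m x - m y" for x y using lin_op_diff[OF mlin] by simp
  have solchar: "a (G u) \<in> domD \<and> D (a (G u)) = m u" if uG: "u \<in> domG" and hb: "\<forall>v\<in>Ed. b u v = 0" for u
  proof -
    have "\<forall>y\<in>adj_dom domD D. cinner (adj domD D y) (a (G u)) = cinner y (m u)"
    proof
      fix y assume "y \<in> adj_dom domD D"
      then have y: "y \<in> Ed" by (simp add: Ed_def)
      have "b u y = 0" using hb y by blast
      then have "cinner (a (G u)) (- Ds y) + cinner (m u) y = 0" using GEd[OF y] by (simp add: b_def)
      then have "cinner (a (G u)) (Ds y) = cinner (m u) y"
        by (simp add: cinner_minus_right eq_neg_iff_add_eq_0[symmetric])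
      then have "cinner (Ds y) (a (G u)) = cinner y (m u)" by (metis cinner_commute)
      then show "cinner (adj domD D y) (a (G u)) = cinner y (m u)" by (simp add: Ds_def)
    qed
    then show ?thesis using von_neumann[OF D_dd D_closed] by blast
  qed
  have uniq: "u1 = u2" if h1: "u1 \<in> domG" "a (G u1) \<in> domD" "m u1 - D (a (G u1)) = 0" "u1 - u0 \<in> Ed"
    and h2: "u2 \<in> domG" "a (G u2) \<in> domD" "m u2 - D (a (G u2)) = 0" "u2 - u0 \<in> Ed" for u0 u1 u2
  proof -
    define w where "w = u1 - u2"
    have wE: "w \<in> Ed" using csubspace_diff[OF csubEd h1(4) h2(4)] by (simp add: w_def)
    have Gw: "G w = G u1 - G u2" using lin_op_diff[OF linG h1(1) h2(1)] by (simp add: w_def)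
    have aGw: "a (G w) = a (G u1) - a (G u2)" by (simp add: Gw adiff)
    have aGwD: "a (G w) \<in> domD" using aGw csubspace_diff[OF subD h1(2) h2(2)] by simp
    have DaGw: "D (a (G w)) = m w"
      using aGw lin_op_diff[OF linD h1(2) h2(2)] h1(3) h2(3) by (simp add: w_def mdiff)
    have "cinner (m w) w = cinner (a (G w)) (Ds w)" using Dadj[OF aGwD wE] DaGw by simp
    also have "\<dots> = - cinner (a (G w)) (G w)" using GEd[OF wE] by (simp add: cinner_minus_right)
    finally have "Re (cinner (m w) w) + Re (cinner (a (G w)) (G w)) = 0" by simp
    moreover have "0 \<le> Re (cinner (a (G w)) (G w))"
      using \<mu>a(2)[of "G w"] \<mu>a(1) by (meson order_trans zero_le_mult_iff zero_le_power2 less_imp_le)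
    ultimately have "\<mu>m * (norm w)^2 \<le> 0" using \<mu>m(2)[of w] by linarith
    then have "norm w = 0" using \<mu>m(1) by (simp add: mult_le_0_iff)
    then show ?thesis by (simp add: w_def)
  qed
  have sol_eq: "dtn_sol domG G domD D a m u0 = u"
    if h: "u \<in> domG" "a (G u) \<in> domD" "m u - D (a (G u)) = 0" "u - u0 \<in> Ed" for u0 u
    unfolding dtn_sol_def
  proof (rule the_equality)
    show "u \<in> domG \<and> a (G u) \<in> domD \<and> m u - D (a (G u)) = 0 \<and> u - u0 \<in> adj_dom domD D"
      using h by (simp add: Ed_def)
  next
    fix u' assume "u' \<in> domG \<and> a (G u') \<in> domD \<and> m u' - D (a (G u')) = 0 \<and> u' - u0 \<in> adj_dom domD D"
    then show "u' = u" using uniq[of u' u0 u] h by (simp add: Ed_def)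
  qed

  define \<beta> where "\<beta> P Q = cinner (a (snd P)) (snd Q) + cinner (m (fst P)) (fst Q)" for P Q :: "'h0 \<times> 'h1"
  have badd: "\<beta> (x + y) v = \<beta> x v + \<beta> y v" for x y v
    by (simp add: \<beta>_def lin_op_add[OF alin] lin_op_add[OF mlin] cinner_add_left)
  have bsc: "\<beta> (c *\<^sub>C x) v = c * \<beta> x v" for c x v
    by (simp add: \<beta>_def scaleC_prod_def lin_op_scaleC[OF alin] lin_op_scaleC[OF mlin]
        cinner_scaleC_left distrib_left)
  have badd2: "\<beta> u (v + w) = \<beta> u v + \<beta> u w" for u v w
    by (simp add: \<beta>_def cinner_add_right)
  have bsc2: "\<beta> u (c *\<^sub>C v) = cnj c * \<beta> u v" for c u v
    by (simp add: \<beta>_def scaleC_prod_def cinner_scaleC_right distrib_left)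
  have bbd: "norm (\<beta> u v) \<le> CC * norm u * norm v" for u v
    using cont_pt[where x="fst u" and y="snd u" and x'="fst v" and y'="snd v"] by (simp add: \<beta>_def)
  have bcoer: "\<mu> * (norm u)^2 \<le> Re (\<beta> u u)" for u
    using coer_pt[where x="fst u" and y="snd u"] by (simp add: \<beta>_def norm_prod_def)
  have exist: "\<exists>u. u \<in> domG \<and> u - u0 \<in> Ed \<and> (\<forall>v\<in>Ed. b u v = 0)" if u0G: "u0 \<in> domG" for u0
  proof -
    define M where "M = {(x, G x) | x. x \<in> Ed}"
    have subM: "csubspace M" unfolding M_def by (rule graph_csubspace[OF linG csubEd EdG])
    have clM: "closed M" unfolding M_def by (rule clEd)
    define \<psi> where "\<psi> Q = - \<beta> (u0, G u0) Q" for Q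
    have padd: "\<psi> (v + w) = \<psi> v + \<psi> w" for v w by (simp add: \<psi>_def badd2)
    have psc: "\<psi> (c *\<^sub>C v) = cnj c * \<psi> v" for c v by (simp add: \<psi>_def bsc2)
    have pbd: "norm (\<psi> v) \<le> (CC * norm (u0, G u0)) * norm v" for v
      using bbd[of "(u0, G u0)" v] by (simp add: \<psi>_def)
    obtain W where W: "W \<in> M" "\<forall>V\<in>M. \<beta> W V = \<psi> V"
      using lax_milgram[OF subM clM badd bsc badd2 bsc2 bbd bcoer \<mu>(1) padd psc pbd] by blast
    then obtain w where w: "w \<in> Ed" "W = (w, G w)" by (auto simp: M_def)
    have wG: "w \<in> domG" using w EdG by blast
    define u where "u = u0 + w"
    have uG: "u \<in> domG" using csubspace_add[OF subG u0G wG] by (simp add: u_def)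
    have Gu: "G u = G u0 + G w" using lin_op_add[OF linG u0G wG] by (simp add: u_def)
    have "b u v = 0" if v: "v \<in> Ed" for v
    proof -
      have "(v, G v) \<in> M" using v by (auto simp: M_def)
      then have bW: "\<beta> W (v, G v) = \<psi> (v, G v)" using W(2) by blast
      have "b u v = \<beta> ((u0, G u0) + (w, G w)) (v, G v)"
        using Gu by (simp add: b_def \<beta>_def u_def)
      also have "\<dots> = \<beta> (u0, G u0) (v, G v) + \<beta> (w, G w) (v, G v)" by (rule badd)
      also have "\<dots> = 0" using bW w(2) by (simp add: \<psi>_def)
      finally show ?thesis .
    qed
    then show ?thesis using uG w(1) by (auto simp: u_def)
  qed

  obtain K where K: "\<forall>u\<in>BG. norm (\<kappa> u) \<le> K * graph_norm G u" using \<kappa>_bdd by (auto simp: BG_def)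
  have \<kappa>add: "\<kappa> (x + y) = \<kappa> x + \<kappa> y" "\<kappa> (c *\<^sub>C x) = c *\<^sub>C \<kappa> x" if "x \<in> BG" "y \<in> BG" for x y c
    using \<kappa>_lin that by (auto simp: clinear_on_def BG_def)
  have \<kappa>0: "\<kappa> 0 = 0" using \<kappa>add(2)[of 0 0 0] csubspace_0[OF csubBG] by simp
  have kadj: "kappa_adj domG G domD D \<kappa> \<psi> \<in> BG \<and>
      (\<forall>u\<in>BG. cinner (\<kappa> u) \<psi> = graph_inner G u (kappa_adj domG G domD D \<kappa> \<psi>))" for \<psi>
  proof -
    define MB where "MB = {(x, G x) | x. x \<in> BG}"
    have subMB: "csubspace MB" unfolding MB_def by (rule graph_csubspace[OF linG csubBG BGG])
    have eqMB: "MB = {(x, G x) | x. x \<in> domG} \<inter> (\<Inter>e\<in>Ed. {P. cinner P (e, G e) = 0})"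
    proof (intro equalityI subsetI)
      fix P assume "P \<in> MB"
      then obtain x where x: "P = (x, G x)" "x \<in> BG" by (auto simp: MB_def)
      then show "P \<in> {(x, G x) | x. x \<in> domG} \<inter> (\<Inter>e\<in>Ed. {P. cinner P (e, G e) = 0})"
        using BG_eq by (auto simp: graph_inner_pair)
    next
      fix P assume P: "P \<in> {(x, G x) | x. x \<in> domG} \<inter> (\<Inter>e\<in>Ed. {P. cinner P (e, G e) = 0})"
      then obtain x where x: "P = (x, G x)" "x \<in> domG" by auto
      then have "x \<in> BG" using P BG_eq by (auto simp: graph_inner_pair)
      then show "P \<in> MB" using x by (auto simp: MB_def)
    qed
    have clMB: "closed MB" unfolding eqMB using G_closed
      by (intro closed_Int closed_INT ballI closed_cinner_eq) (simp add: closed_op_def)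
    define \<phi> where "\<phi> P = cinner (\<kappa> (fst P)) \<psi>" for P :: "'h0 \<times> 'h1"
    have fstMB: "fst P \<in> BG" if "P \<in> MB" for P using that by (auto simp: MB_def)
    have padd: "\<phi> (x + y) = \<phi> x + \<phi> y" if "x \<in> MB" "y \<in> MB" for x y
      using \<kappa>add(1)[OF fstMB[OF that(1)] fstMB[OF that(2)]] by (simp add: \<phi>_def cinner_add_left)
    have psc: "\<phi> (c *\<^sub>C x) = c * \<phi> x" if "x \<in> MB" for c x
      using \<kappa>add(2)[OF fstMB[OF that] fstMB[OF that]] by (simp add: \<phi>_def scaleC_prod_def cinner_scaleC_left)
    have pbd: "norm (\<phi> P) \<le> (K * norm \<psi>) * norm P" if PMB: "P \<in> MB" for P
    proof -
      obtain x where x: "P = (x, G x)" "x \<in> BG" using PMB by (auto simp: MB_def)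
      have "norm (\<phi> P) \<le> norm (\<kappa> x) * norm \<psi>" using cauchy_schwarz by (simp add: \<phi>_def x)
      also have "\<dots> \<le> (K * graph_norm G x) * norm \<psi>" using K x(2) by (simp add: mult_right_mono)
      finally show ?thesis by (simp add: graph_norm_pair x mult_ac)
    qed
    obtain g where g: "g \<in> MB" "\<forall>v\<in>MB. \<phi> v = cinner v g"
      using riesz[OF subMB clMB padd psc pbd] by blast
    then obtain k where k: "g = (k, G k)" "k \<in> BG" by (auto simp: MB_def)
    have kprop: "\<forall>u\<in>BG. cinner (\<kappa> u) \<psi> = graph_inner G u k"
    proof
      fix u assume "u \<in> BG"
      then have "(u, G u) \<in> MB" by (auto simp: MB_def)
      then have "\<phi> (u, G u) = cinner (u, G u) g" using g(2) by blast
      then show "cinner (\<kappa> u) \<psi> = graph_inner G u k" using k(1) by (simp add: \<phi>_def graph_inner_pair)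
    qed
    have "kappa_adj domG G domD D \<kappa> \<psi> = k" unfolding kappa_adj_def BG_def[symmetric]
    proof (rule the_equality)
      show "k \<in> BG \<and> (\<forall>u\<in>BG. cinner (\<kappa> u) \<psi> = graph_inner G u k)" using k kprop by blast
    next
      fix k' assume h: "k' \<in> BG \<and> (\<forall>u\<in>BG. cinner (\<kappa> u) \<psi> = graph_inner G u k')"
      have dB: "k' - k \<in> BG" using csubspace_diff[OF csubBG _ k(2)] h by blast
      have "graph_inner G (k' - k) u = 0" if "u \<in> BG" for u
      proof -
        have "graph_inner G u k' = graph_inner G u k" using h kprop that by metis
        then have "graph_inner G k' u = graph_inner G k u"
          using graph_inner_commute[of G k' u] graph_inner_commute[of G k u] by simp
        then show ?thesis using graph_inner_diff_left[OF linG, of k' k u] h k(2) BGG by auto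
      qed
      then have "graph_inner G (k' - k) (k' - k) = 0" using dB by blast
      then show "k' = k" using graph_inner_self_zero by fastforce
    qed
    then show ?thesis using k(2) kprop by simp
  qed

  have jv: "j v = \<kappa> (\<pi> v)" for v by (simp add: j_def \<pi>_def BG_def)
  have piE: "\<pi> v = 0" if "v \<in> Ed" for v
    using pi_eq[of v 0] that EdG csubspace_0[OF csubBG] by auto
  have piB: "\<pi> v = v" if "v \<in> BG" for v
    using pi_eq[of v v] that BGG csubspace_0[OF csubEd] by auto
  have Lam: "dtn_Lambda domG G domD D a m u0 = \<pi>D (a (G (dtn_sol domG G domD D a m u0)))" for u0
    by (simp add: dtn_Lambda_def \<pi>D_def BD_def)
  have GG: "graph_inner D (G k) (G v) = graph_inner G k v" if "k \<in> BG" "v \<in> BG" for k v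
    using F3[OF that(1)] F3[OF that(2)] by (simp add: graph_inner_def)
  have kf: "graph_inner G k v = cinner f (\<kappa> v)" if "v \<in> BG" "k = kappa_adj domG G domD D \<kappa> f" for k v f
  proof -
    have "cinner (\<kappa> v) f = graph_inner G v k" using kadj[of f] that by blast
    then show ?thesis using graph_inner_commute[of G k v] cinner_commute[of f "\<kappa> v"] by simp
  qed
  have dir1: "dtn_H domG G domD D a m \<kappa> x f" if FO: "form_op domG b j x f" for x f
  proof -
    obtain u where u: "u \<in> domG" "j u = x" "\<forall>v\<in>domG. b u v = cinner f (j v)"
      using FO by (auto simp: form_op_def)
    define u0 where "u0 = \<pi> u"
    have u0: "u0 \<in> BG" "u - u0 \<in> Ed" using decG[OF u(1)] by (auto simp: u0_def)
    have hb: "\<forall>v\<in>Ed. b u v = 0"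
    proof
      fix v assume v: "v \<in> Ed"
      then have "b u v = cinner f (j v)" using u(3) EdG by blast
      also have "\<dots> = 0" using piE[OF v] \<kappa>0 by (simp add: jv)
      finally show "b u v = 0" .
    qed
    have sc: "a (G u) \<in> domD" "D (a (G u)) = m u" using solchar[OF u(1) hb] by auto
    have sol: "dtn_sol domG G domD D a m u0 = u" using sol_eq[OF u(1) sc(1) _ u0(2)] sc(2) by simp
    define k where "k = kappa_adj domG G domD D \<kappa> f"
    have kB: "k \<in> BG" using kadj[of f] by (simp add: k_def)
    define d where "d = \<pi>D (a (G u)) - G k"
    have pD: "\<pi>D (a (G u)) \<in> BD" using decD[OF sc(1)] by blast
    have GkB: "G k \<in> BD" using F3b[OF kB] .
    have dB: "d \<in> BD" unfolding d_def using csubspace_diff[OF csubBD pD GkB] .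
    have orth: "graph_inner D d (G v) = 0" if v: "v \<in> BG" for v
    proof -
      have "graph_inner D (\<pi>D (a (G u))) (G v) = cinner (a (G u)) (G v) + cinner (D (a (G u))) v"
        using green[OF sc(1) v] by simp
      also have "\<dots> = b u v" using sc(2) by (simp add: b_def)
      also have "\<dots> = cinner f (\<kappa> v)" using u(3) v BGG piB[OF v] by (auto simp: jv)
      finally have h1: "graph_inner D (\<pi>D (a (G u))) (G v) = cinner f (\<kappa> v)" .
      have h2: "graph_inner D (G k) (G v) = cinner f (\<kappa> v)" using GG[OF kB v] kf[OF v k_def] by simp
      show ?thesis unfolding d_def using graph_inner_diff_left[OF linD, of "\<pi>D (a (G u))" "G k" "G v"]
        pD GkB BDD h1 h2 by auto
    qed
    have "graph_inner D d d = 0" using orth[OF conjunct1[OF F4[OF dB]]] conjunct2[OF F4[OF dB]] by simp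
    then have "d = 0" by (rule graph_inner_self_zero)
    then have "dtn_Lambda domG G domD D a m u0 = G (kappa_adj domG G domD D \<kappa> f)"
      using Lam[of u0] sol by (simp add: d_def k_def)
    moreover have "\<kappa> u0 = x" using u(2) by (simp add: jv u0_def)
    ultimately show ?thesis unfolding dtn_H_def using u0(1) by (auto simp: BG_def)
  qed
  have dir2: "form_op domG b j x f" if DH: "dtn_H domG G domD D a m \<kappa> x f" for x f
  proof -
    obtain u0 where u0: "u0 \<in> BG" "\<kappa> u0 = x" "dtn_Lambda domG G domD D a m u0 = G (kappa_adj domG G domD D \<kappa> f)"
      using DH by (auto simp: dtn_H_def BG_def)
    have u0G: "u0 \<in> domG" using u0(1) BGG by blast
    obtain u where u: "u \<in> domG" "u - u0 \<in> Ed" "\<forall>v\<in>Ed. b u v = 0" using exist[OF u0G] by blast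
    have sc: "a (G u) \<in> domD" "D (a (G u)) = m u" using solchar[OF u(1) u(3)] by auto
    have sol: "dtn_sol domG G domD D a m u0 = u" using sol_eq[OF u(1) sc(1) _ u(2)] sc(2) by simp
    define k where "k = kappa_adj domG G domD D \<kappa> f"
    have kB: "k \<in> BG" using kadj[of f] by (simp add: k_def)
    have PD: "\<pi>D (a (G u)) = G k" using u0(3) Lam[of u0] sol by (simp add: k_def)
    have piu: "\<pi> u = u0" using pi_eq[OF u(1) u0(1) u(2)] .
    have "b u v = cinner f (j v)" if v: "v \<in> domG" for v
    proof -
      define pv where "pv = \<pi> v"
      define ev where "ev = v - pv"
      have pv: "pv \<in> BG" "ev \<in> Ed" using decG[OF v] by (auto simp: pv_def ev_def)
      have pvG: "pv \<in> domG" "ev \<in> domG" using pv BGG EdG by auto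
      have Gv: "G v = G pv + G ev" using lin_op_add[OF linG pvG] by (simp add: ev_def)
      have "b u v = b u pv + b u ev"
      proof -
        have "cinner (m u) v = cinner (m u) (pv + ev)" by (simp add: ev_def)
        then show ?thesis using Gv by (simp add: b_def cinner_add_right)
      qed
      also have "b u ev = 0" using u(3) pv(2) by blast
      also have "b u pv = graph_inner D (\<pi>D (a (G u))) (G pv)"
        using green[OF sc(1) pv(1)] sc(2) by (simp add: b_def)
      also have "\<dots> = cinner f (\<kappa> pv)" using PD GG[OF kB pv(1)] kf[OF pv(1) k_def] by simp
      finally show ?thesis by (simp add: jv pv_def)
    qed
    moreover have "j u = x" using piu u0(2) by (simp add: jv)
    ultimately show ?thesis unfolding form_op_def using u(1) by blast
  qed
  have "dtn_H domG G domD D a m \<kappa> = form_op domG b j"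
    using dir1 dir2 by (intro ext) blast
  then show ?thesis using coercive continuous by blast
qed


end
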